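(* Let $n\ge 3$, $0<m<\frac{n-2}{n}$, $m\ne\frac{n-2}{n+2}$, $\lambda>0$, $\beta>0$. Let $v$ be the radially symmetric solution described in the context, $w(s)=r^2v(r)^{1-m}$ with $s=\log r$, $h(s)=w(s)-\frac{2(n-1)(n-2-nm)}{(1-m)\beta}s$, $h_1(s)=h(s)+\frac{(n-1)[n-2-(n+2)m]}{(1-m)\beta}\log s$, $K(\lambda,\beta)=\lim_{s\to\infty}h_1(s)$ (a finite limit), \[ h_2(s)=h_1(s)-K(\lambda,\beta)-\frac{(n-1)(n-2-(n+2)m)^2}{2(n-2-nm)(1-m)\beta}\cdot\frac{1+\log s}{s}, \] and \[ a_1(\lambda,\beta)=\frac{2(1-2m)(n-1)(n-2-nm)}{(1-m)^2}+\frac{(n-1)(n-2-(n+2)m)^2}{(1-m)^2}+\frac{n-2-(n+2)m}{1-m}K(\lambda,\beta)\beta . \] Then \[ h_2(s)=-\frac{(1-m)a_1(\lambda,\beta)}{2(n-2-nm)\beta s}+\frac{\varepsilon(s)}{s}\quad\text{as }s\to\infty, \] where $\varepsilon(s)\to0$ as $s\to\infty$.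
   Context: $v=v(r)$, $r=|x|$, is the unique radially symmetric positive classical solution of $\frac{n-1}{m}\Delta v^m+\frac{2\beta}{1-m}v+\beta x\cdot\nabla v=0$ in $\mathbb{R}^n$ with $v(0)=\lambda$. *)

theory Defs
  imports "HOL-Analysis.Analysis"
begin

definition partial :: "'n::finite \<Rightarrow> (real^'n \<Rightarrow> real) \<Rightarrow> real^'n \<Rightarrow> real" where
  "partial i f x = deriv (\<lambda>t. f (x + t *\<^sub>R axis i 1)) 0"

definition laplacian :: "(real^'n::finite \<Rightarrow> real) \<Rightarrow> real^'n \<Rightarrow> real" where
  "laplacian f x = (\<Sum>i\<in>UNIV. partial i (partial i f) x)"

definition C2_fun :: "(real^'n::finite \<Rightarrow> real) \<Rightarrow> bool" where
  "C2_fun f \<longleftrightarrow> (\<forall>x. f differentiable (at x))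
     \<and> (\<forall>i x. partial i f differentiable (at x))
     \<and> (\<forall>i j. continuous_on UNIV (partial j (partial i f)))"

definition classical_sol :: "real \<Rightarrow> real \<Rightarrow> (real^'n::finite \<Rightarrow> real) \<Rightarrow> bool" where
  "classical_sol m \<beta> V \<longleftrightarrow> (\<forall>x. V x > 0) \<and> C2_fun V \<and>
     (\<forall>x. (real CARD('n) - 1) / m * laplacian (\<lambda>y. V y powr m) x
          + 2 * \<beta> / (1 - m) * V x
          + \<beta> * (\<Sum>i\<in>UNIV. x $ i * partial i V x) = 0)"

definition w_fun :: "real \<Rightarrow> (real \<Rightarrow> real) \<Rightarrow> real \<Rightarrow> real" where
  "w_fun m v s = (exp s)\<^sup>2 * v (exp s) powr (1 - m)"

definition h_fun :: "real \<Rightarrow> real \<Rightarrow> real \<Rightarrow> (real \<Rightarrow> real) \<Rightarrow> real \<Rightarrow> real" where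
  "h_fun n m \<beta> v s = w_fun m v s - 2 * (n - 1) * (n - 2 - n * m) / ((1 - m) * \<beta>) * s"

definition h1_fun :: "real \<Rightarrow> real \<Rightarrow> real \<Rightarrow> (real \<Rightarrow> real) \<Rightarrow> real \<Rightarrow> real" where
  "h1_fun n m \<beta> v s = h_fun n m \<beta> v s + (n - 1) * (n - 2 - (n + 2) * m) / ((1 - m) * \<beta>) * ln s"

definition h2_fun :: "real \<Rightarrow> real \<Rightarrow> real \<Rightarrow> (real \<Rightarrow> real) \<Rightarrow> real \<Rightarrow> real \<Rightarrow> real" where
  "h2_fun n m \<beta> v K s = h1_fun n m \<beta> v s - K
     - (n - 1) * (n - 2 - (n + 2) * m)\<^sup>2 / (2 * (n - 2 - n * m) * (1 - m) * \<beta>) * ((1 + ln s) / s)"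

definition a1_fun :: "real \<Rightarrow> real \<Rightarrow> real \<Rightarrow> real \<Rightarrow> real" where
  "a1_fun n m \<beta> K = 2 * (1 - 2 * m) * (n - 1) * (n - 2 - n * m) / (1 - m)\<^sup>2
     + (n - 1) * (n - 2 - (n + 2) * m)\<^sup>2 / (1 - m)\<^sup>2
     + (n - 2 - (n + 2) * m) / (1 - m) * K * \<beta>"

end

theory Submission
  imports Defs "HOL-Real_Asymp.Real_Asymp"
begin


lemma bar_lemma:
  fixes f f' :: "real \<Rightarrow> real"
  assumes der: "\<And>s. s \<ge> T \<Longrightarrow> (f has_real_derivative f' s) (at s)"
    and d: "\<delta> > 0" and neg: "\<And>s. s \<ge> T \<Longrightarrow> f s > 0 \<Longrightarrow> f' s \<le> -\<delta>"
  shows "eventually (\<lambda>s. f s \<le> 0) at_top"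
proof (cases "\<exists>s1\<ge>T. f s1 \<le> 0")
  case True
  then obtain s1 where s1: "s1 \<ge> T" "f s1 \<le> 0" by auto
  have "\<forall>s\<ge>s1. f s \<le> 0"
  proof (rule ccontr)
    assume "\<not> (\<forall>s\<ge>s1. f s \<le> 0)"
    then obtain s2 where s2: "s2 \<ge> s1" "f s2 > 0" by auto
    have cont: "continuous_on {s1..s2} f"
      using der s1 by (meson DERIV_isCont atLeastAtMost_iff continuous_at_imp_continuous_on order_trans)
    obtain t where t: "t \<in> {s1..s2}" "\<forall>x\<in>{s1..s2}. f x \<le> f t"
      using continuous_attains_sup[OF compact_Icc _ cont] s2 by fastforce
    have "f s2 \<le> f t" using t s2(1) by auto
    then have ft: "f t > 0" using s2 by linarith
    then have "t \<noteq> s1" using s1 by auto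
    with t have ts: "t > s1" by auto
    have "f' t \<le> -\<delta>" using neg[of t] t s1 ft by auto
    then have "f' t < 0" using d by linarith
    from DERIV_neg_dec_left[OF der[of t] this] t s1
    obtain e where e: "e > 0" "\<forall>h>0. h < e \<longrightarrow> f t < f (t - h)" by auto
    define h where "h = min (e/2) (t - s1)"
    have "h > 0" "h < e" using e ts by (auto simp: h_def)
    then have "f t < f (t - h)" using e by auto
    moreover have "t - h \<in> {s1..s2}" using t ts \<open>h>0\<close> by (auto simp: h_def)
    ultimately show False using t by force
  qed
  then show ?thesis by (auto simp: eventually_at_top_linorder)
next
  case False
  then have pos: "\<And>s. s \<ge> T \<Longrightarrow> f s > 0" by force
  define s where "s = T + f T / \<delta> + 1"
  have "f T / \<delta> \<ge> 0" using pos[of T] d by simp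
  then have sT: "s \<ge> T" by (simp add: s_def)
  have "(\<lambda>x. f x + \<delta> * x) s \<le> (\<lambda>x. f x + \<delta> * x) T"
    apply (rule DERIV_nonpos_imp_nonincreasing[OF sT])
    apply (rule exI[where x="f' _ + \<delta>"])
    using der neg pos by (auto intro!: derivative_eq_intros) (smt (verit))
  then have "f s \<le> f T - \<delta> * (s - T)" by (simp add: algebra_simps)
  also have "\<delta> * (s - T) = f T + \<delta>" using d by (simp add: s_def field_simps)
  finally have "f s < 0" using d by simp
  with pos[OF sT] show ?thesis by simp
qed


lemma lim_lemma:
  fixes y y' a :: "real \<Rightarrow> real"
  assumes der: "\<And>s. s \<ge> T \<Longrightarrow> (y has_real_derivative y' s) (at s)"
    and a: "\<And>s. s \<ge> T \<Longrightarrow> a s \<ge> amin" and amin: "amin > 0"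
    and l: "((\<lambda>s. y s + y' s / a s) \<longlongrightarrow> L) at_top"
  shows "(y \<longlongrightarrow> L) at_top"
proof (rule tendstoI)
  fix e :: real assume e: "e > 0"
  have "eventually (\<lambda>s. dist (y s + y' s / a s) L < e/4) at_top"
    using tendstoD[OF l, of "e/4"] e by simp
  then obtain T1 where T1: "\<And>s. s \<ge> T1 \<Longrightarrow> \<bar>y s + y' s / a s - L\<bar> < e/4"
    by (auto simp: eventually_at_top_linorder dist_real_def)
  define T2 where "T2 = max T T1"
  have yeq: "y' s = a s * ((y s + y' s / a s) - y s)" if "s \<ge> T2" for s
  proof -
    have "a s > 0" using a[of s] amin that by (simp add: T2_def)
    then show ?thesis by (simp add: field_simps)
  qed
  have up: "eventually (\<lambda>s. y s - (L + e/2) \<le> 0) at_top"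
  proof (rule bar_lemma[where T=T2 and f'=y' and \<delta>="amin * (e/4)"])
    show "\<And>s. T2 \<le> s \<Longrightarrow> ((\<lambda>s. y s - (L + e / 2)) has_real_derivative y' s) (at s)"
      using der by (auto simp: T2_def intro!: derivative_eq_intros)
    show "0 < amin * (e / 4)" using amin e by simp
    fix s assume s: "T2 \<le> s" "0 < y s - (L + e / 2)"
    have "\<bar>y s + y' s / a s - L\<bar> < e/4" using T1 s by (simp add: T2_def)
    then have "(y s + y' s / a s) - y s \<le> - (e/4)" using s by linarith
    moreover have "a s \<ge> amin" using a s by (simp add: T2_def)
    ultimately have "a s * ((y s + y' s / a s) - y s) \<le> amin * (- (e/4))"
    proof -
      assume h1: "(y s + y' s / a s) - y s \<le> - (e/4)" and h2: "a s \<ge> amin"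
      have "a s * ((y s + y' s / a s) - y s) \<le> amin * ((y s + y' s / a s) - y s)"
        using h1 h2 e by (intro mult_right_mono_neg) auto
      also have "\<dots> \<le> amin * (- (e/4))" using h1 amin by (intro mult_left_mono) auto
      finally show ?thesis .
    qed
    then show "y' s \<le> - (amin * (e / 4))" using yeq[OF s(1)] by simp
  qed
  have lo: "eventually (\<lambda>s. (L - e/2) - y s \<le> 0) at_top"
  proof (rule bar_lemma[where T=T2 and f'="\<lambda>s. - y' s" and \<delta>="amin * (e/4)"])
    show "\<And>s. T2 \<le> s \<Longrightarrow> ((\<lambda>s. (L - e/2) - y s) has_real_derivative - y' s) (at s)"
      using der by (auto simp: T2_def intro!: derivative_eq_intros)
    show "0 < amin * (e / 4)" using amin e by simp
    fix s assume s: "T2 \<le> s" "0 < (L - e/2) - y s"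
    have "\<bar>y s + y' s / a s - L\<bar> < e/4" using T1 s by (simp add: T2_def)
    then have "(y s + y' s / a s) - y s \<ge> (e/4)" using s by linarith
    moreover have "a s \<ge> amin" using a s by (simp add: T2_def)
    ultimately have "a s * ((y s + y' s / a s) - y s) \<ge> amin * (e/4)"
      using amin e by (intro mult_mono) auto
    then show "- y' s \<le> - (amin * (e / 4))" using yeq[OF s(1)] by simp
  qed
  from up lo show "eventually (\<lambda>s. dist (y s) L < e) at_top"
    by eventually_elim (use e in \<open>auto simp: dist_real_def\<close>)
qed

lemma antimono_lim:
  fixes f :: "real \<Rightarrow> real"
  assumes mono: "\<And>s t. T \<le> s \<Longrightarrow> s \<le> t \<Longrightarrow> f t \<le> f s"
    and bdd: "\<And>s. T \<le> s \<Longrightarrow> f s \<ge> b"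
  shows "\<exists>K. (f \<longlongrightarrow> K) at_top"
proof
  define K where "K = Inf (f ` {T..})"
  have bd: "bdd_below (f ` {T..})" using bdd unfolding bdd_below_def by (metis atLeast_iff imageE)
  have low: "K \<le> f s" if "s \<ge> T" for s
    unfolding K_def by (rule cInf_lower) (use that bd in auto)
  show "(f \<longlongrightarrow> K) at_top"
  proof (rule tendstoI)
    fix e :: real assume e: "e > 0"
    have "\<exists>x\<in>f ` {T..}. x < K + e"
      unfolding K_def by (rule cInf_lessD) (use bd e in auto)
    then obtain t where t: "t \<ge> T" "f t < K + e" by auto
    have "\<forall>s\<ge>t. dist (f s) K < e"
    proof safe
      fix s assume "s \<ge> t"
      then have "f s \<le> f t" "K \<le> f s" using mono[of t s] low[of s] t by auto
      then show "dist (f s) K < e" using t by (simp add: dist_real_def)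
    qed
    then show "eventually (\<lambda>s. dist (f s) K < e) at_top"
      by (auto simp: eventually_at_top_linorder)
  qed
qed



lemma alg1:
  fixes w p m nn N \<beta> k :: real
  assumes "m = 1 - k" "k \<noteq> 0" "N \<noteq> 0" "\<beta> \<noteq> 0"
  shows "(w * p) * p + (- (m * (p - 2)^2 / k + (nn - 2) * (p - 2)) - \<beta> * w * p / N) * w
    = - (\<beta> * w / N) * (w * p - 2 * N * (nn - 2 - nn * m) / (k * \<beta>)) - (w * p) * ((nn - 2 - (nn + 2) * m) - (1 - 2 * m) * p) / k"
proof -
  have "((w * p) * p + (- (m * (p - 2)^2 / k + (nn - 2) * (p - 2)) - \<beta> * w * p / N) * w) * (k * N)
    = (- (\<beta> * w / N) * (w * p - 2 * N * (nn - 2 - nn * m) / (k * \<beta>)) - (w * p) * ((nn - 2 - (nn + 2) * m) - (1 - 2 * m) * p) / k) * (k * N)"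
    using assms(2-4) unfolding assms(1) by (simp add: field_simps power2_eq_square)
  then show ?thesis using assms by simp
qed


lemma alg2:
  fixes w p m N \<beta> k A B P z y z' y' y2 y2' :: real
  assumes "m = 1 - k" "k \<noteq> 0" "N \<noteq> 0" "\<beta> \<noteq> 0" "w \<noteq> 0"
    and "B = N * P / ((1 - m) * \<beta>)" "z = w * p" "y = w * (z - A)"
    and "z' = - (\<beta> * w / N) * (z - A) - z * ((P - (1 - 2 * m) * p) / (1 - m))"
    and "y' = z * (z - A) + w * z'" and "y2 = w * (y + A * B)" and "y2' = z * (y + A * B) + w * y'"
  shows "y2 + y2' / (\<beta> * w / N) = (N / \<beta>) * z * (2 * y + A * B) * inverse w
      + (N / \<beta>) * (- y * P + (1 - 2 * m) * z^2) / (1 - m)"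
  using assms(2-5) unfolding assms(6-12) unfolding assms(1)
  by (simp add: field_simps power2_eq_square)

lemma mono_lim_ge:
  fixes f :: "real \<Rightarrow> real"
  assumes mono: "\<And>s t. T \<le> s \<Longrightarrow> s \<le> t \<Longrightarrow> f t \<le> f s"
    and lim: "(f \<longlongrightarrow> L) at_top" and s: "s \<ge> T"
  shows "L \<le> f s"
proof (rule tendsto_upperbound[OF lim])
  show "eventually (\<lambda>t. f t \<le> f s) at_top"
    using mono[OF s] by (auto simp: eventually_at_top_linorder)
qed simp

locale asy =
  fixes nn m \<beta> :: real and w p p' :: "real \<Rightarrow> real"
  assumes n3: "nn \<ge> 3" and m0: "0 < m" and Qpos: "nn - 2 - nn * m > 0" and b0: "\<beta> > 0"
    and wpos: "\<And>s. w s > 0" and ppos: "\<And>s. p s > 0"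
    and wder: "\<And>s. (w has_real_derivative w s * p s) (at s)"
    and pder: "\<And>s. (p has_real_derivative p' s) (at s)"
    and ode: "\<And>s. (nn - 1) * (p' s + m * (p s - 2)^2 / (1 - m) + (nn - 2) * (p s - 2))
                 + \<beta> * w s * p s = 0"
begin

definition "N = nn - 1"
definition "Q = nn - 2 - nn * m"
definition "P = nn - 2 - (nn + 2) * m"
definition "A = 2 * N * Q / ((1 - m) * \<beta>)"
definition "B = N * P / ((1 - m) * \<beta>)"
definition "z s = w s * p s"
definition "z' s = - (\<beta> * w s / N) * (z s - A) - z s * (P - (1 - 2 * m) * p s) / (1 - m)"

lemma m1: "m < 1"
proof -
  have "nn * m < nn - 2" using Qpos by simp
  moreover have "nn > 0" using n3 by simp
  ultimately have "nn * m < nn * 1" by linarith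
  then show ?thesis using \<open>nn > 0\<close> by simp
qed

lemma Npos: "N > 0" using n3 by (simp add: N_def)
lemma Q0: "Q > 0" using Qpos by (simp add: Q_def)
lemma Apos: "A > 0" using Npos Q0 m1 b0 by (simp add: A_def)

lemma p'_eq: "p' s = - (m * (p s - 2)^2 / (1 - m) + (nn - 2) * (p s - 2)) - \<beta> * w s * p s / N"
proof -
  have "N * p' s = N * (- (m * (p s - 2)^2 / (1 - m) + (nn - 2) * (p s - 2))) - \<beta> * w s * p s"
    using ode[of s] by (simp add: N_def algebra_simps)
  then show ?thesis using Npos by (simp add: field_simps)
qed

lemma zder: "(z has_real_derivative z' s) (at s)"
proof -
  have "(z has_real_derivative (w s * p s) * p s + p' s * w s) (at s)"
    unfolding z_def[abs_def] by (rule DERIV_mult[OF wder pder])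
  moreover have "(w s * p s) * p s + p' s * w s = z' s"
    unfolding p'_eq z'_def z_def A_def P_def Q_def
    by (rule alg1) (use Npos m1 b0 in auto)
  ultimately show ?thesis by simp
qed

lemma w_mono: "s \<le> t \<Longrightarrow> w s \<le> w t"
proof (rule DERIV_nonneg_imp_nondecreasing[of s t w])
  fix x show "\<exists>y. (w has_real_derivative y) (at x) \<and> 0 \<le> y"
    using wder[of x] wpos[of x] ppos[of x] by (intro exI[of _ "w x * p x"]) simp
qed

end

context asy begin

lemma z_ev_ge: "\<exists>\<delta>>0. eventually (\<lambda>s. z s \<ge> \<delta>) at_top"
proof -
  define w0 where "w0 = w 0"
  have w0: "w0 > 0" using wpos by (simp add: w0_def)
  define pm where "pm = A / (2 * w0)"
  define M where "M = (\<bar>P\<bar> + \<bar>1 - 2 * m\<bar> * pm) / (1 - m)"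
  have M0: "M \<ge> 0" using m1 Apos w0 by (simp add: M_def pm_def)
  define \<delta> where "\<delta> = min (A / 2) (\<beta> * w0 * A / (4 * N * (M + 1)))"
  have d0: "\<delta> > 0" using Apos b0 w0 Npos M0 by (simp add: \<delta>_def)
  have dA: "\<delta> \<le> A / 2" by (simp add: \<delta>_def)
  have dM: "\<delta> * M \<le> \<beta> * w0 * A / (4 * N)"
  proof -
    have "\<delta> \<le> \<beta> * w0 * A / (4 * N * (M + 1))" by (simp add: \<delta>_def)
    moreover have pos: "4 * N * (M + 1) > 0" using M0 Npos by simp
    ultimately have "\<delta> * (4 * N * (M + 1)) \<le> \<beta> * w0 * A"
      by (simp add: pos_le_divide_eq)
    then have "\<delta> * (M + 1) \<le> \<beta> * w0 * A / (4 * N)"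
      using Npos by (simp add: pos_le_divide_eq mult_ac)
    moreover have "\<delta> * M \<le> \<delta> * (M + 1)" using d0 by simp
    ultimately show ?thesis by linarith
  qed
  have "eventually (\<lambda>s. \<delta> - z s \<le> 0) at_top"
  proof (rule bar_lemma[where T=0 and f'="\<lambda>s. - z' s" and \<delta>="\<beta> * w0 * A / (4 * N)"])
    show "\<And>s. 0 \<le> s \<Longrightarrow> ((\<lambda>s. \<delta> - z s) has_real_derivative - z' s) (at s)"
      using zder by (auto intro!: derivative_eq_intros)
    show "0 < \<beta> * w0 * A / (4 * N)" using b0 w0 Apos Npos by simp
    fix s :: real assume s: "0 \<le> s" "0 < \<delta> - z s"
    have ws: "w s \<ge> w0" using w_mono[OF s(1)] by (simp add: w0_def)
    have zs: "z s < \<delta>" "z s > 0" using s ppos wpos by (auto simp: z_def)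
    have ps: "p s \<le> pm"
    proof -
      have "p s = z s / w s" using wpos[of s] by (simp add: z_def)
      also have "\<dots> \<le> \<delta> / w0" using zs ws w0 by (intro frac_le) auto
      also have "\<dots> \<le> pm" using dA w0 by (simp add: pm_def field_simps)
      finally show ?thesis .
    qed
    have cb: "\<bar>(P - (1 - 2 * m) * p s) / (1 - m)\<bar> \<le> M"
    proof -
      have "\<bar>P - (1 - 2 * m) * p s\<bar> \<le> \<bar>P\<bar> + \<bar>1 - 2 * m\<bar> * p s"
        using ppos[of s] by (simp add: abs_mult abs_triangle_ineq4 order_trans[OF abs_triangle_ineq4])
      also have "\<dots> \<le> \<bar>P\<bar> + \<bar>1 - 2 * m\<bar> * pm" using ps by (simp add: mult_left_mono)
      finally show ?thesis using m1 by (simp add: M_def abs_divide divide_right_mono)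
    qed
    have t1: "(\<beta> * w s / N) * (A - z s) \<ge> (\<beta> * w0 / N) * (A / 2)"
      using ws zs dA b0 Npos w0 by (intro mult_mono) (auto simp: divide_right_mono)
    have t2: "z s * ((P - (1 - 2 * m) * p s) / (1 - m)) \<le> \<delta> * M"
    proof -
      have "z s * ((P - (1 - 2 * m) * p s) / (1 - m)) \<le> \<bar>z s\<bar> * \<bar>(P - (1 - 2 * m) * p s) / (1 - m)\<bar>"
        by (metis abs_ge_self abs_mult)
      also have "\<dots> \<le> \<delta> * M" using zs cb M0 by (intro mult_mono) auto
      finally show ?thesis .
    qed
    have "z' s = (\<beta> * w s / N) * (A - z s) - z s * ((P - (1 - 2 * m) * p s) / (1 - m))"
      by (simp add: z'_def algebra_simps)
    also have "\<dots> \<ge> (\<beta> * w0 / N) * (A / 2) - \<beta> * w0 * A / (4 * N)" using t1 t2 dM by linarith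
    finally show "- z' s \<le> - (\<beta> * w0 * A / (4 * N))" by (simp add: field_simps)
  qed
  then show ?thesis using d0 by (auto elim!: eventually_mono intro!: exI[of _ \<delta>])
qed

lemma w_lin: "\<exists>c>0. \<exists>T. \<forall>s\<ge>T. w s \<ge> c * (s - T)"
proof -
  obtain \<delta> where d: "\<delta> > 0" "eventually (\<lambda>s. z s \<ge> \<delta>) at_top" using z_ev_ge by auto
  then obtain T where T: "\<And>s. s \<ge> T \<Longrightarrow> z s \<ge> \<delta>" by (auto simp: eventually_at_top_linorder)
  have "w s \<ge> \<delta> * (s - T)" if s: "s \<ge> T" for s
  proof -
    have "(\<lambda>x. w x - \<delta> * x) T \<le> (\<lambda>x. w x - \<delta> * x) s"
    proof (rule DERIV_nonneg_imp_nondecreasing[OF s])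
      fix x assume "T \<le> x" "x \<le> s"
      then show "\<exists>y. ((\<lambda>x. w x - \<delta> * x) has_real_derivative y) (at x) \<and> 0 \<le> y"
        using T[of x] wder[of x]
        by (intro exI[of _ "w x * p x - \<delta>"]) (auto intro!: derivative_eq_intros simp: z_def)
    qed
    then show ?thesis using wpos[of T] by (simp add: algebra_simps)
  qed
  then show ?thesis using d by blast
qed

lemma w_top: "filterlim w at_top at_top"
proof -
  obtain c T where cT: "c > 0" "\<And>s. s \<ge> T \<Longrightarrow> w s \<ge> c * (s - T)" using w_lin by blast
  have "filterlim (\<lambda>s. c * (s - T)) at_top at_top"
    using cT(1) by real_asymp
  then show ?thesis
    by (rule filterlim_at_top_mono) (use cT in \<open>auto simp: eventually_at_top_linorder\<close>)
qed

lemma p_ev_le2: "eventually (\<lambda>s. p s \<le> 2) at_top"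
proof -
  have "eventually (\<lambda>s. p s - 2 \<le> 0) at_top"
  proof (rule bar_lemma[where T=0 and f'=p' and \<delta>="2 * \<beta> * w 0 / N"])
    show "\<And>s. 0 \<le> s \<Longrightarrow> ((\<lambda>s. p s - 2) has_real_derivative p' s) (at s)"
      using pder by (auto intro!: derivative_eq_intros)
    show "0 < 2 * \<beta> * w 0 / N" using b0 wpos Npos by simp
    fix s :: real assume s: "0 \<le> s" "0 < p s - 2"
    have ws: "w s \<ge> w 0" using w_mono[OF s(1)] .
    have a: "m * (p s - 2)^2 / (1 - m) + (nn - 2) * (p s - 2) \<ge> 0"
      using s m0 m1 n3 by (intro add_nonneg_nonneg) auto
    have "\<beta> * w s * p s / N \<ge> \<beta> * w 0 * 2 / N"
      using ws s b0 Npos wpos[of 0] by (intro divide_right_mono mult_mono) auto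
    then show "p' s \<le> - (2 * \<beta> * w 0 / N)" using a unfolding p'_eq by (simp add: field_simps)
  qed
  then show ?thesis by (auto elim: eventually_mono)
qed

end

context asy begin

definition "a s = \<beta> * w s / N"
definition "F x = m * (x - 2)^2 / (1 - m) + (nn - 2) * (x - 2)"

lemma a_ge: "s \<ge> 0 \<Longrightarrow> a s \<ge> \<beta> * w 0 / N"
  using w_mono[of 0 s] b0 Npos by (simp add: a_def divide_right_mono)

lemma a0: "\<beta> * w 0 / N > 0" using b0 wpos Npos by simp

lemma winv0: "((\<lambda>s. inverse (w s)) \<longlongrightarrow> 0) at_top"
  using filterlim_at_top_imp_at_infinity[OF w_top] tendsto_inverse_0 filterlim_compose by blast

lemma p_lim: "(p \<longlongrightarrow> 0) at_top"
proof (rule lim_lemma[where T=0 and y'=p' and a=a and amin="\<beta> * w 0 / N"])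
  show "\<And>s. 0 \<le> s \<Longrightarrow> (p has_real_derivative p' s) (at s)" using pder by simp
  show "\<And>s. 0 \<le> s \<Longrightarrow> \<beta> * w 0 / N \<le> a s" using a_ge by simp
  show "0 < \<beta> * w 0 / N" by (rule a0)
  have eq: "p s + p' s / a s = - (N / \<beta>) * F (p s) * inverse (w s)" for s
    using wpos[of s] b0 Npos unfolding p'_eq a_def F_def by (simp add: field_simps)
  define C where "C = (N / \<beta>) * (4 * m / (1 - m) + \<bar>nn - 2\<bar> * 2)"
  have "((\<lambda>s. - (N / \<beta>) * F (p s) * inverse (w s)) \<longlongrightarrow> 0) at_top"
  proof (rule Lim_null_comparison)
    show "((\<lambda>s. C * inverse (w s)) \<longlongrightarrow> 0) at_top" using tendsto_mult_right_zero[OF winv0] by simp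
    show "eventually (\<lambda>s. norm (- (N / \<beta>) * F (p s) * inverse (w s)) \<le> C * inverse (w s)) at_top"
      using p_ev_le2
    proof eventually_elim
      case (elim s)
      have ps: "0 < p s" "p s \<le> 2" using ppos elim by auto
      have "\<bar>F (p s)\<bar> \<le> m * (p s - 2)^2 / (1 - m) + \<bar>nn - 2\<bar> * \<bar>p s - 2\<bar>"
        unfolding F_def using m0 m1 by (simp add: abs_mult order_trans[OF abs_triangle_ineq])
      also have "\<dots> \<le> 4 * m / (1 - m) + \<bar>nn - 2\<bar> * 2"
      proof -
        have "(p s - 2)^2 = (2 - p s)^2" by (simp add: power2_commute)
        also have "\<dots> \<le> 2^2" using ps by (intro power_mono) auto
        finally have "(p s - 2)^2 \<le> 4" by simp
        then have "m * (p s - 2)^2 / (1 - m) \<le> 4 * m / (1 - m)"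
          using m0 m1 by (simp add: divide_right_mono)
        moreover have "\<bar>nn - 2\<bar> * \<bar>p s - 2\<bar> \<le> \<bar>nn - 2\<bar> * 2" using ps by (intro mult_left_mono) auto
        ultimately show ?thesis by linarith
      qed
      finally have "\<bar>F (p s)\<bar> \<le> 4 * m / (1 - m) + \<bar>nn - 2\<bar> * 2" .
      then have "N * \<bar>F (p s)\<bar> * inverse (w s) / \<beta> \<le> N * (4 * m / (1 - m) + \<bar>nn - 2\<bar> * 2) * inverse (w s) / \<beta>"
        using wpos[of s] b0 Npos by (intro divide_right_mono mult_right_mono mult_left_mono) auto
      then show ?case using wpos[of s] b0 Npos
        by (simp add: C_def abs_mult)
    qed
  qed
  then show "((\<lambda>s. p s + p' s / a s) \<longlongrightarrow> 0) at_top" by (simp add: eq)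
qed

definition "c s = (P - (1 - 2 * m) * p s) / (1 - m)"

lemma c_lim: "(c \<longlongrightarrow> P / (1 - m)) at_top"
  unfolding c_def using p_lim m1 by (auto intro!: tendsto_eq_intros)

lemma z'_eq: "z' s = - a s * (z s - A) - z s * c s"
  by (simp add: z'_def a_def c_def)

lemma z_lim: "(z \<longlongrightarrow> A) at_top"
proof (rule lim_lemma[where T=0 and y'=z' and a=a and amin="\<beta> * w 0 / N"])
  show "\<And>s. 0 \<le> s \<Longrightarrow> (z has_real_derivative z' s) (at s)" using zder by simp
  show "\<And>s. 0 \<le> s \<Longrightarrow> \<beta> * w 0 / N \<le> a s" using a_ge by simp
  show "0 < \<beta> * w 0 / N" by (rule a0)
  have eq: "z s + z' s / a s = A - (N / \<beta>) * p s * c s" for s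
    using wpos[of s] b0 Npos unfolding z'_eq a_def z_def by (simp add: field_simps)
  have "((\<lambda>s. A - (N / \<beta>) * p s * c s) \<longlongrightarrow> A - (N / \<beta>) * 0 * (P / (1 - m))) at_top"
    by (intro tendsto_intros p_lim c_lim)
  then show "((\<lambda>s. z s + z' s / a s) \<longlongrightarrow> A) at_top"
    unfolding eq by simp
qed

definition "y s = w s * (z s - A)"
definition "y' s = z s * (z s - A) + w s * z' s"

lemma yder: "(y has_real_derivative y' s) (at s)"
proof -
  have "(y has_real_derivative (w s * p s) * (z s - A) + (z' s - 0) * w s) (at s)"
    unfolding y_def[abs_def] by (rule DERIV_mult[OF wder DERIV_diff[OF zder DERIV_const]])
  then show ?thesis by (simp add: y'_def z_def algebra_simps)
qed

lemma y_lim: "(y \<longlongrightarrow> - A * B) at_top"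
proof (rule lim_lemma[where T=0 and y'=y' and a=a and amin="\<beta> * w 0 / N"])
  show "\<And>s. 0 \<le> s \<Longrightarrow> (y has_real_derivative y' s) (at s)" using yder by simp
  show "\<And>s. 0 \<le> s \<Longrightarrow> \<beta> * w 0 / N \<le> a s" using a_ge by simp
  show "0 < \<beta> * w 0 / N" by (rule a0)
  have eq: "y s + y' s / a s = (N / \<beta>) * z s * (z s - A) * inverse (w s) - (N / \<beta>) * z s * c s" for s
    using wpos[of s] b0 Npos unfolding y'_def y_def z'_eq a_def by (simp add: field_simps)
  have AB: "- A * B = (N / \<beta>) * A * (A - A) * 0 - (N / \<beta>) * A * (P / (1 - m))"
    using b0 Npos m1 by (simp add: B_def field_simps)
  have "((\<lambda>s. (N / \<beta>) * z s * (z s - A) * inverse (w s) - (N / \<beta>) * z s * c s)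
     \<longlongrightarrow> (N / \<beta>) * A * (A - A) * 0 - (N / \<beta>) * A * (P / (1 - m))) at_top"
    by (intro tendsto_intros z_lim c_lim winv0)
  then show "((\<lambda>s. y s + y' s / a s) \<longlongrightarrow> - A * B) at_top"
    unfolding eq AB .
qed

definition "y2 s = w s * (y s + A * B)"
definition "y2' s = z s * (y s + A * B) + w s * y' s"
definition "C2 = (N / ((1 - m) * \<beta>)) * (A * B * P + (1 - 2 * m) * A^2)"

lemma y2der: "(y2 has_real_derivative y2' s) (at s)"
proof -
  have "(y2 has_real_derivative (w s * p s) * (y s + A * B) + (y' s + 0) * w s) (at s)"
    unfolding y2_def[abs_def] by (rule DERIV_mult[OF wder DERIV_add[OF yder DERIV_const]])
  then show ?thesis by (simp add: y2'_def z_def algebra_simps)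
qed

lemma y2_lim: "(y2 \<longlongrightarrow> C2) at_top"
proof (rule lim_lemma[where T=0 and y'=y2' and a=a and amin="\<beta> * w 0 / N"])
  show "\<And>s. 0 \<le> s \<Longrightarrow> (y2 has_real_derivative y2' s) (at s)" using y2der by simp
  show "\<And>s. 0 \<le> s \<Longrightarrow> \<beta> * w 0 / N \<le> a s" using a_ge by simp
  show "0 < \<beta> * w 0 / N" by (rule a0)
  have eq: "y2 s + y2' s / a s = (N / \<beta>) * z s * (2 * y s + A * B) * inverse (w s)
      + (N / \<beta>) * (- y s * P + (1 - 2 * m) * (z s)^2) / (1 - m)" for s
  proof -
    have k: "1 - m \<noteq> 0" using m1 by simp
    have "w s * p s = z s" by (simp add: z_def)
    show ?thesis unfolding a_def
      by (rule alg2[where k="1 - m"]) (use wpos[of s] b0 Npos k in \<open>auto simp: y2'_def y2_def y'_def y_def z'_def c_def B_def z_def\<close>)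
  qed
  have C2: "C2 = (N / \<beta>) * A * (2 * (- A * B) + A * B) * 0 + (N / \<beta>) * (- (- A * B) * P + (1 - 2 * m) * A^2) / (1 - m)"
  proof -
    have k: "1 - m \<noteq> 0" using m1 by simp
    show ?thesis using b0 Npos k by (simp add: C2_def field_simps)
  qed
  have "((\<lambda>s. (N / \<beta>) * z s * (2 * y s + A * B) * inverse (w s)
      + (N / \<beta>) * (- y s * P + (1 - 2 * m) * (z s)^2) / (1 - m)) \<longlongrightarrow>
      (N / \<beta>) * A * (2 * (- A * B) + A * B) * 0 + (N / \<beta>) * (- (- A * B) * P + (1 - 2 * m) * A^2) / (1 - m)) at_top"
    by (intro tendsto_intros z_lim y_lim winv0) (use m1 in auto)
  then show "((\<lambda>s. y2 s + y2' s / a s) \<longlongrightarrow> C2) at_top"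
    unfolding eq C2 .
qed

end

context asy begin

lemma bounds: "\<exists>T0\<ge>1. \<exists>Cy Cy2. \<forall>s\<ge>T0. z s \<ge> A / 2 \<and> \<bar>y s\<bar> \<le> Cy \<and> \<bar>y2 s\<bar> \<le> Cy2"
proof -
  have e1: "eventually (\<lambda>s. z s \<ge> A / 2) at_top"
    using order_tendstoD(1)[OF z_lim, of "A/2"] Apos by (auto elim: eventually_mono)
  have e2: "eventually (\<lambda>s. \<bar>y s\<bar> \<le> \<bar>A * B\<bar> + 1) at_top"
    using tendstoD[OF y_lim, of 1] by (auto elim!: eventually_mono simp: dist_real_def)
  have e3: "eventually (\<lambda>s. \<bar>y2 s\<bar> \<le> \<bar>C2\<bar> + 1) at_top"
    using tendstoD[OF y2_lim, of 1] by (auto elim!: eventually_mono simp: dist_real_def)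
  have "eventually (\<lambda>s. s \<ge> 1 \<and> z s \<ge> A / 2 \<and> \<bar>y s\<bar> \<le> \<bar>A * B\<bar> + 1 \<and> \<bar>y2 s\<bar> \<le> \<bar>C2\<bar> + 1) at_top"
    using e1 e2 e3 eventually_ge_at_top[of 1] by eventually_elim auto
  then obtain T0 where "\<And>s. s \<ge> T0 \<Longrightarrow> s \<ge> 1 \<and> z s \<ge> A / 2 \<and> \<bar>y s\<bar> \<le> \<bar>A * B\<bar> + 1 \<and> \<bar>y2 s\<bar> \<le> \<bar>C2\<bar> + 1"
    by (auto simp: eventually_at_top_linorder)
  then show ?thesis by (intro exI[of _ T0] conjI exI[of _ "\<bar>A * B\<bar> + 1"] exI[of _ "\<bar>C2\<bar> + 1"]) auto
qed

end

locale asy2 = asy +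
  fixes T0 Cy Cy2 :: real
  assumes T0: "T0 \<ge> 1" and bnd: "\<And>s. s \<ge> T0 \<Longrightarrow> z s \<ge> A / 2 \<and> \<bar>y s\<bar> \<le> Cy \<and> \<bar>y2 s\<bar> \<le> Cy2"
begin

definition "T1 = 2 * T0"
definition "cc = A / 4"

lemma T1: "T1 \<ge> 2" "T1 \<ge> T0" using T0 by (auto simp: T1_def)
lemma cc: "cc > 0" using Apos by (simp add: cc_def)

lemma w_ge: "s \<ge> T1 \<Longrightarrow> w s \<ge> cc * s"
proof -
  assume s: "s \<ge> T1"
  have "(\<lambda>x. w x - A / 2 * x) T0 \<le> (\<lambda>x. w x - A / 2 * x) s"
  proof (rule DERIV_nonneg_imp_nondecreasing[of T0 s])
    show "T0 \<le> s" using s T1 T0 by (auto simp: T1_def)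
  next
    fix x assume "T0 \<le> x" "x \<le> s"
    then show "\<exists>d. ((\<lambda>x. w x - A / 2 * x) has_real_derivative d) (at x) \<and> 0 \<le> d"
      using bnd[of x] wder[of x]
      by (intro exI[of _ "w x * p x - A / 2"]) (auto intro!: derivative_eq_intros simp: z_def)
  qed
  then have "w s \<ge> w T0 + A / 2 * (s - T0)" by (simp add: algebra_simps diff_divide_distrib)
  moreover have "A / 2 * (s - T0) \<ge> cc * s"
    using s Apos by (simp add: T1_def cc_def field_simps)
  ultimately show ?thesis using wpos[of T0] by linarith
qed

definition "del s = w s - A * s"

lemma del_bound: "\<exists>Cd\<ge>0. \<forall>s\<ge>T1. \<bar>del s\<bar> \<le> Cd * (1 + ln s)"
proof -
  define Kd where "Kd = \<bar>Cy\<bar> / cc"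
  have Kd: "Kd \<ge> 0" using cc by (simp add: Kd_def)
  have dd: "\<bar>z x - A\<bar> \<le> Kd / x" if "x \<ge> T1" for x
  proof -
    have x0: "x > 0" using that T1 by simp
    have wx: "w x \<ge> cc * x" using w_ge that by simp
    have "\<bar>z x - A\<bar> = \<bar>y x\<bar> / w x" using wpos[of x] by (simp add: y_def abs_mult)
    also have "\<dots> \<le> \<bar>Cy\<bar> / (cc * x)"
      using bnd[of x] that T1 wx wpos[of x] cc x0 by (intro frac_le) auto
    also have "\<dots> = Kd / x" by (simp add: Kd_def)
    finally show ?thesis .
  qed
  have up: "del s - del T1 \<le> Kd * (ln s - ln T1)" if s: "s \<ge> T1" for s
  proof -
    have "(\<lambda>x. del x - Kd * ln x) s \<le> (\<lambda>x. del x - Kd * ln x) T1"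
    proof (rule DERIV_nonpos_imp_nonincreasing[OF s])
      fix x assume x: "T1 \<le> x" "x \<le> s"
      then have x0: "x > 0" using T1 by simp
      have "z x - A \<le> Kd / x" using dd[OF x(1)] by simp
      then show "\<exists>d. ((\<lambda>x. del x - Kd * ln x) has_real_derivative d) (at x) \<and> d \<le> 0"
        using wder[of x] x0
        by (intro exI[of _ "w x * p x - A - Kd * (1 / x)"]) (auto intro!: derivative_eq_intros simp: del_def z_def)
    qed
    then show ?thesis by (simp add: algebra_simps)
  qed
  have lo: "del T1 - del s \<le> Kd * (ln s - ln T1)" if s: "s \<ge> T1" for s
  proof -
    have "(\<lambda>x. del x + Kd * ln x) T1 \<le> (\<lambda>x. del x + Kd * ln x) s"
    proof (rule DERIV_nonneg_imp_nondecreasing[OF s])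
      fix x assume x: "T1 \<le> x" "x \<le> s"
      then have x0: "x > 0" using T1 by simp
      have "-(z x - A) \<le> Kd / x" using dd[OF x(1)] by simp
      then show "\<exists>d. ((\<lambda>x. del x + Kd * ln x) has_real_derivative d) (at x) \<and> 0 \<le> d"
        using wder[of x] x0
        by (intro exI[of _ "w x * p x - A + Kd * (1 / x)"]) (auto intro!: derivative_eq_intros simp: del_def z_def)
    qed
    then show ?thesis by (simp add: algebra_simps)
  qed
  define Cd where "Cd = max \<bar>del T1\<bar> Kd"
  have "\<forall>s\<ge>T1. \<bar>del s\<bar> \<le> Cd * (1 + ln s)"
  proof safe
    fix s assume s: "s \<ge> T1"
    have l1: "ln T1 \<ge> 0" using T1 by simp
    have ls: "ln s \<ge> 0" using T1 s by simp
    have k1: "Kd * ln T1 \<ge> 0" using Kd l1 by simp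
    have k2: "Kd * (ln s - ln T1) = Kd * ln s - Kd * ln T1" by (simp add: algebra_simps)
    have "\<bar>del s\<bar> \<le> \<bar>del T1\<bar> + Kd * ln s" using up[OF s] lo[OF s] k1 k2
      by (simp add: abs_le_iff) linarith
    also have "\<dots> \<le> Cd + Cd * ln s" using ls Kd by (intro add_mono mult_right_mono) (auto simp: Cd_def)
    finally show "\<bar>del s\<bar> \<le> Cd * (1 + ln s)" by (simp add: algebra_simps)
  qed
  then show ?thesis by (intro exI[of _ Cd]) (auto simp: Cd_def)
qed

end

context asy2 begin

lemma main_asy:
  "\<exists>K. ((\<lambda>s. w s - A * s + B * ln s) \<longlongrightarrow> K) at_top \<and>
     ((\<lambda>s. s * (w s - A * s + B * ln s - K - (B^2 / A) * (1 + ln s) / s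
         + (C2 / A^2 + (B / A) * K) / s)) \<longlongrightarrow> 0) at_top"
proof -
  obtain Cd where Cd: "Cd \<ge> 0" "\<And>s. s \<ge> T1 \<Longrightarrow> \<bar>del s\<bar> \<le> Cd * (1 + ln s)"
    using del_bound by auto
  define h1 where "h1 s = w s - A * s + B * ln s" for s
  define e where "e s = z s - A + B / s" for s
  have h1der: "(h1 has_real_derivative e s) (at s)" if "s > 0" for s
    unfolding h1_def[abs_def] e_def using wder[of s] that
    by (auto intro!: derivative_eq_intros simp: z_def field_simps)
  have e_id: "e s = y2 s / (w s)^2 + B * del s / (w s * s)" if "s > 0" for s
    using that wpos[of s] unfolding e_def y2_def y_def del_def
    by (simp add: field_simps power2_eq_square)
  define C3 where "C3 = \<bar>Cy2\<bar> / cc^2 + \<bar>B\<bar> * Cd / cc"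
  have C3: "C3 \<ge> 0" using cc Cd by (simp add: C3_def)
  have ebound: "\<bar>e s\<bar> \<le> C3 * (1 + ln s) / s^2" if s: "s \<ge> T1" for s
  proof -
    have s0: "s > 0" "s \<ge> 1" using s T1 by auto
    have ls: "1 + ln s \<ge> 1" using s0 by simp
    have ws: "w s \<ge> cc * s" using w_ge s by simp
    have wp: "w s > 0" by (rule wpos)
    have ccs: "cc * s > 0" using cc s0 by simp
    have a1: "\<bar>y2 s / (w s)^2\<bar> \<le> \<bar>Cy2\<bar> / cc^2 * (1 + ln s) / s^2"
    proof -
      have "\<bar>y2 s / (w s)^2\<bar> = \<bar>y2 s\<bar> / (w s)^2" by (simp add: abs_divide)
      also have "\<dots> \<le> \<bar>Cy2\<bar> / (cc * s)^2"
        using bnd[of s] s T1 ws ccs by (intro frac_le power_mono) auto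
      also have "\<dots> = \<bar>Cy2\<bar> / cc^2 * 1 / s^2" by (simp add: power_mult_distrib)
      also have "\<dots> \<le> \<bar>Cy2\<bar> / cc^2 * (1 + ln s) / s^2"
        using ls cc s0 by (intro divide_right_mono mult_left_mono) auto
      finally show ?thesis .
    qed
    have a2: "\<bar>B * del s / (w s * s)\<bar> \<le> \<bar>B\<bar> * Cd / cc * (1 + ln s) / s^2"
    proof -
      have "\<bar>B * del s / (w s * s)\<bar> = \<bar>B\<bar> * \<bar>del s\<bar> / (w s * s)"
        using wp s0 by (simp add: abs_divide abs_mult)
      also have "\<dots> \<le> \<bar>B\<bar> * (Cd * (1 + ln s)) / (cc * s * s)"
        using Cd(2)[OF s] ws ccs s0 by (intro frac_le mult_left_mono mult_right_mono) auto
      also have "\<dots> = \<bar>B\<bar> * Cd / cc * (1 + ln s) / s^2"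
        using cc by (simp add: field_simps power2_eq_square)
      finally show ?thesis .
    qed
    have "\<bar>e s\<bar> \<le> \<bar>y2 s / (w s)^2\<bar> + \<bar>B * del s / (w s * s)\<bar>"
      unfolding e_id[OF s0(1)] by (rule abs_triangle_ineq)
    also have "\<dots> \<le> C3 * (1 + ln s) / s^2" using a1 a2 by (simp add: C3_def add_divide_distrib distrib_right)
    finally show ?thesis .
  qed
  define Gp where "Gp s = h1 s + C3 * (2 + ln s) / s" for s
  define Gm where "Gm s = h1 s - C3 * (2 + ln s) / s" for s
  have gder: "((\<lambda>s. C3 * (2 + ln s) / s) has_real_derivative - C3 * (1 + ln s) / s^2) (at s)"
    if "s > 0" for s
    using that by (auto intro!: derivative_eq_intros simp: field_simps power2_eq_square)
  have Gp_mono: "Gp t \<le> Gp s" if "T1 \<le> s" "s \<le> t" for s t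
  proof (rule DERIV_nonpos_imp_nonincreasing[of s t Gp])
    show "s \<le> t" by fact
    fix x assume x: "s \<le> x" "x \<le> t"
    then have x0: "x > 0" "x \<ge> T1" using that T1 by auto
    have "e x \<le> C3 * (1 + ln x) / x^2" using ebound[OF x0(2)] by simp
    then show "\<exists>d. (Gp has_real_derivative d) (at x) \<and> d \<le> 0"
      unfolding Gp_def[abs_def]
      by (intro exI[of _ "e x + - C3 * (1 + ln x) / x^2"] conjI DERIV_add h1der gder x0)
        (simp add: diff_divide_distrib)
  qed
  have Gm_mono: "Gm s \<le> Gm t" if "T1 \<le> s" "s \<le> t" for s t
  proof (rule DERIV_nonneg_imp_nondecreasing[of s t Gm])
    show "s \<le> t" by fact
    fix x assume x: "s \<le> x" "x \<le> t"
    then have x0: "x > 0" "x \<ge> T1" using that T1 by auto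
    have "- e x \<le> C3 * (1 + ln x) / x^2" using ebound[OF x0(2)] by simp
    then show "\<exists>d. (Gm has_real_derivative d) (at x) \<and> 0 \<le> d"
      unfolding Gm_def[abs_def]
      by (intro exI[of _ "e x - - C3 * (1 + ln x) / x^2"] conjI DERIV_diff h1der gder x0)
        (simp add: diff_divide_distrib)
  qed
  have Gbd: "Gp s \<ge> Gm T1" if "T1 \<le> s" for s
  proof -
    have "Gm T1 \<le> Gm s" using Gm_mono[of T1 s] that by simp
    moreover have "Gm s \<le> Gp s" using C3 that T1 by (simp add: Gm_def Gp_def)
    ultimately show ?thesis by linarith
  qed
  obtain K where K: "(Gp \<longlongrightarrow> K) at_top"
    using antimono_lim[of T1 Gp "Gm T1"] Gp_mono Gbd by blast
  have lg: "((\<lambda>s::real. (2 + ln s) / s) \<longlongrightarrow> 0) at_top" by real_asymp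
  have lg1: "((\<lambda>s::real. (1 + ln s) / s) \<longlongrightarrow> 0) at_top" by real_asymp
  have lg2: "((\<lambda>s::real. (1 + ln s)^2 / s) \<longlongrightarrow> 0) at_top" by real_asymp
  have ls0: "((\<lambda>s::real. 1 / s) \<longlongrightarrow> 0) at_top" by real_asymp
  have h1K: "(h1 \<longlongrightarrow> K) at_top"
  proof -
    have "((\<lambda>s. Gp s - C3 * ((2 + ln s) / s)) \<longlongrightarrow> K - C3 * 0) at_top"
      by (intro tendsto_intros K lg)
    then show ?thesis by (simp add: Gp_def)
  qed
  have delw: "((\<lambda>s. del s / w s) \<longlongrightarrow> 0) at_top"
  proof (rule Lim_null_comparison)
    show "((\<lambda>s. Cd / cc * ((1 + ln s) / s)) \<longlongrightarrow> 0) at_top"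
      by (rule tendsto_mult_right_zero[OF lg1])
    show "eventually (\<lambda>s. norm (del s / w s) \<le> Cd / cc * ((1 + ln s) / s)) at_top"
      using eventually_ge_at_top[of T1]
    proof eventually_elim
      case (elim s)
      have s0: "s > 0" "s \<ge> 1" using elim T1 by auto
      have "norm (del s / w s) = \<bar>del s\<bar> / w s" using wpos[of s] by (simp add: abs_divide)
      also have "\<dots> \<le> (Cd * (1 + ln s)) / (cc * s)"
        using Cd(2)[OF elim] w_ge[OF elim] cc s0 by (intro frac_le) auto
      also have "\<dots> = Cd / cc * ((1 + ln s) / s)" by simp
      finally show ?case .
    qed
  qed
  have del2w: "((\<lambda>s. (del s)^2 / w s) \<longlongrightarrow> 0) at_top"
  proof (rule Lim_null_comparison)
    show "((\<lambda>s. Cd^2 / cc * ((1 + ln s)^2 / s)) \<longlongrightarrow> 0) at_top"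
      by (rule tendsto_mult_right_zero[OF lg2])
    show "eventually (\<lambda>s. norm ((del s)^2 / w s) \<le> Cd^2 / cc * ((1 + ln s)^2 / s)) at_top"
      using eventually_ge_at_top[of T1]
    proof eventually_elim
      case (elim s)
      have s0: "s > 0" "s \<ge> 1" using elim T1 by auto
      have "\<bar>del s\<bar>^2 \<le> (Cd * (1 + ln s))^2"
        using Cd(2)[OF elim] by (intro power_mono) auto
      then have "norm ((del s)^2 / w s) \<le> (Cd * (1 + ln s))^2 / (cc * s)"
        using w_ge[OF elim] cc s0 wpos[of s] by (simp add: abs_divide) (intro frac_le, auto)
      also have "\<dots> = Cd^2 / cc * ((1 + ln s)^2 / s)" by (simp add: power_mult_distrib)
      finally show ?case .
    qed
  qed
  have sw: "((\<lambda>s. s / w s) \<longlongrightarrow> 1 / A) at_top"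
  proof -
    have eq: "s / w s = (1 - del s / w s) / A" for s
      using wpos[of s] Apos by (simp add: del_def field_simps)
    have "((\<lambda>s. (1 - del s / w s) / A) \<longlongrightarrow> (1 - 0) / A) at_top"
      by (intro tendsto_intros delw) (use Apos in auto)
    then show ?thesis by (simp add: eq)
  qed
  define c' where "c' = C2 / A^2 + (B / A) * K"
  define q where "q s = s^2 * e s + (B^2 / A) * ln s" for s
  have q_id: "q s = y2 s * (s / w s)^2 + (B / A) * h1 s - (B / A) * ((del s)^2 / w s)"
    if "s > 0" for s
    using that wpos[of s] Apos unfolding q_def e_id[OF that] h1_def del_def
    by (simp add: field_simps power2_eq_square)
  have q_lim: "(q \<longlongrightarrow> c') at_top"
  proof -
    have "((\<lambda>s. y2 s * (s / w s)^2 + (B / A) * h1 s - (B / A) * ((del s)^2 / w s))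
        \<longlongrightarrow> C2 * (1 / A)^2 + (B / A) * K - (B / A) * 0) at_top"
      by (intro tendsto_intros y2_lim sw h1K del2w)
    moreover have "eventually (\<lambda>s. y2 s * (s / w s)^2 + (B / A) * h1 s - (B / A) * ((del s)^2 / w s) = q s) at_top"
      using eventually_gt_at_top[of 0] by eventually_elim (simp add: q_id)
    ultimately have "(q \<longlongrightarrow> C2 * (1 / A)^2 + (B / A) * K - (B / A) * 0) at_top"
      by (rule Lim_transform_eventually)
    then show ?thesis by (simp add: c'_def power_divide)
  qed
  define F where "F s = h1 s - K - (B^2 / A) * (1 + ln s) / s + c' / s" for s
  have Fder: "(F has_real_derivative (q s - c') / s^2) (at s)" if "s > 0" for s
  proof -
    have d1: "((\<lambda>s. (B^2 / A) * (1 + ln s) / s) has_real_derivative - (B^2 / A) * ln s / s^2) (at s)"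
      using that Apos by (auto intro!: derivative_eq_intros simp: field_simps power2_eq_square)
    have d2: "((\<lambda>s. c' / s) has_real_derivative - c' / s^2) (at s)"
      using that by (auto intro!: derivative_eq_intros simp: field_simps power2_eq_square)
    have "(F has_real_derivative e s - 0 - - (B^2 / A) * ln s / s^2 + - c' / s^2) (at s)"
      unfolding F_def[abs_def]
      by (intro DERIV_add DERIV_diff h1der d1 d2 DERIV_const that)
    moreover have "e s - 0 - - (B^2 / A) * ln s / s^2 + - c' / s^2 = (q s - c') / s^2"
      using that by (simp add: q_def field_simps power2_eq_square)
    ultimately show ?thesis by simp
  qed
  have F0: "(F \<longlongrightarrow> 0) at_top"
  proof -
    have "((\<lambda>s. h1 s - K - (B^2 / A) * ((1 + ln s) / s) + c' * (1 / s)) \<longlongrightarrow> K - K - (B^2 / A) * 0 + c' * 0) at_top"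
      by (intro tendsto_intros h1K lg1 ls0)
    then show ?thesis by (simp add: F_def[abs_def])
  qed
  have fin: "((\<lambda>s. s * F s) \<longlongrightarrow> 0) at_top"
  proof (rule tendstoI)
    fix \<epsilon> :: real assume ep: "\<epsilon> > 0"
    define \<epsilon>' where "\<epsilon>' = \<epsilon> / 2"
    have ep': "\<epsilon>' > 0" using ep by (simp add: \<epsilon>'_def)
    have "eventually (\<lambda>s. dist (q s) c' < \<epsilon>') at_top" using tendstoD[OF q_lim ep'] .
    then obtain T2 where T2: "\<And>s. s \<ge> T2 \<Longrightarrow> \<bar>q s - c'\<bar> < \<epsilon>'"
      by (auto simp: eventually_at_top_linorder dist_real_def)
    define T3 where "T3 = max T2 1"
    have T3: "T3 \<ge> 1" "T3 \<ge> T2" by (auto simp: T3_def)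
    define Fp where "Fp s = F s + \<epsilon>' * (1 / s)" for s
    define Fm where "Fm s = - (F s - \<epsilon>' * (1 / s))" for s
    have dinv: "((\<lambda>s. \<epsilon>' * (1 / s)) has_real_derivative - \<epsilon>' / s^2) (at s)" if "s > 0" for s
      using that by (auto intro!: derivative_eq_intros simp: field_simps power2_eq_square)
    have Fp_mono: "Fp t \<le> Fp s" if "T3 \<le> s" "s \<le> t" for s t
    proof (rule DERIV_nonpos_imp_nonincreasing[of s t Fp])
      show "s \<le> t" by fact
      fix x assume x: "s \<le> x" "x \<le> t"
      then have x0: "x > 0" "x \<ge> T2" using that T3 by auto
      have "(q x - c') / x^2 \<le> \<epsilon>' / x^2" using T2[OF x0(2)] x0 by (intro divide_right_mono) auto
      then show "\<exists>d. (Fp has_real_derivative d) (at x) \<and> d \<le> 0"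
        unfolding Fp_def[abs_def]
        by (intro exI[of _ "(q x - c') / x^2 + - \<epsilon>' / x^2"] conjI DERIV_add Fder dinv x0) simp
    qed
    have Fm_mono: "Fm t \<le> Fm s" if "T3 \<le> s" "s \<le> t" for s t
    proof (rule DERIV_nonpos_imp_nonincreasing[of s t Fm])
      show "s \<le> t" by fact
      fix x assume x: "s \<le> x" "x \<le> t"
      then have x0: "x > 0" "x \<ge> T2" using that T3 by auto
      have "(- (q x - c')) / x^2 \<le> \<epsilon>' / x^2" using T2[OF x0(2)] x0 by (intro divide_right_mono) auto
      then have "- ((q x - c') / x^2) \<le> \<epsilon>' / x^2" by (simp add: minus_divide_left)
      then show "\<exists>d. (Fm has_real_derivative d) (at x) \<and> d \<le> 0"
        unfolding Fm_def[abs_def]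
        by (intro exI[of _ "- ((q x - c') / x^2 - - \<epsilon>' / x^2)"] conjI DERIV_minus DERIV_diff Fder dinv x0) simp
    qed
    have Fp0: "(Fp \<longlongrightarrow> 0) at_top"
    proof -
      have "((\<lambda>s. F s + \<epsilon>' * (1 / s)) \<longlongrightarrow> 0 + \<epsilon>' * 0) at_top" by (intro tendsto_intros F0 ls0)
      then show ?thesis by (simp add: Fp_def[abs_def])
    qed
    have Fm0: "(Fm \<longlongrightarrow> 0) at_top"
    proof -
      have "((\<lambda>s. - (F s - \<epsilon>' * (1 / s))) \<longlongrightarrow> - (0 - \<epsilon>' * 0)) at_top" by (intro tendsto_intros F0 ls0)
      then show ?thesis by (simp add: Fm_def[abs_def])
    qed
    have "\<forall>s\<ge>T3. dist (s * F s) 0 < \<epsilon>"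
    proof safe
      fix s assume s: "s \<ge> T3"
      have s0: "s > 0" using s T3 by simp
      have "0 \<le> Fp s" by (rule mono_lim_ge[OF _ Fp0 s]) (rule Fp_mono)
      moreover have "0 \<le> Fm s" by (rule mono_lim_ge[OF _ Fm0 s]) (rule Fm_mono)
      ultimately have "\<bar>F s\<bar> \<le> \<epsilon>' / s" by (simp add: Fp_def Fm_def)
      then have "\<bar>s * F s\<bar> \<le> \<epsilon>'" using s0 by (simp add: abs_mult field_simps)
      then show "dist (s * F s) 0 < \<epsilon>" using ep by (simp add: \<epsilon>'_def dist_real_def)
    qed
    then show "eventually (\<lambda>s. dist (s * F s) 0 < \<epsilon>) at_top"
      by (auto simp: eventually_at_top_linorder)
  qed
  show ?thesis
    using h1K fin unfolding h1_def F_def c'_def by blast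
qed

end


context asy begin
lemma asy_result:
  "\<exists>K. ((\<lambda>s. w s - A * s + B * ln s) \<longlongrightarrow> K) at_top \<and>
     ((\<lambda>s. s * (w s - A * s + B * ln s - K - (B^2 / A) * (1 + ln s) / s
         + (C2 / A^2 + (B / A) * K) / s)) \<longlongrightarrow> 0) at_top"
proof -
  obtain T0 where "T0 \<ge> 1" "\<exists>Cy Cy2. \<forall>s\<ge>T0. z s \<ge> A / 2 \<and> \<bar>y s\<bar> \<le> Cy \<and> \<bar>y2 s\<bar> \<le> Cy2"
    using bounds by blast
  then obtain Cy Cy2 where "\<And>s. s \<ge> T0 \<Longrightarrow> z s \<ge> A / 2 \<and> \<bar>y s\<bar> \<le> Cy \<and> \<bar>y2 s\<bar> \<le> Cy2" "T0 \<ge> 1"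
    by blast
  then interpret asy2 nn m \<beta> w p p' T0 Cy Cy2 by unfold_locales auto
  show ?thesis by (rule main_asy)
qed
end

lemma alg3:
  fixes r V V1 V2 M nn m \<beta> k :: real
  assumes "m = 1 - k" "k \<noteq> 0" "m \<noteq> 0" "r \<noteq> 0" "V \<noteq> 0" "M \<noteq> 0"
    and ode: "(nn - 1) / m * (m * ((m - 1) * (M / V^2) * V1^2 + (M / V) * V2) + (nn - 1) * (m * (M / V) * V1) / r)
       + 2 * \<beta> / (1 - m) * V + \<beta> * (r * V1) = 0"
  shows "(nn - 1) * ((1 - m) * (((r * V1 + r * (r * V2)) * V - r * V1 * (r * V1)) / V^2)
      + m * ((2 + (1 - m) * (r * V1 / V)) - 2)^2 / (1 - m) + (nn - 2) * ((2 + (1 - m) * (r * V1 / V)) - 2))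
      + \<beta> * (r^2 * (V / M)) * (2 + (1 - m) * (r * V1 / V)) = 0"
proof -
  have "(nn - 1) * ((1 - m) * (((r * V1 + r * (r * V2)) * V - r * V1 * (r * V1)) / V^2)
      + m * ((2 + (1 - m) * (r * V1 / V)) - 2)^2 / (1 - m) + (nn - 2) * ((2 + (1 - m) * (r * V1 / V)) - 2))
      + \<beta> * (r^2 * (V / M)) * (2 + (1 - m) * (r * V1 / V))
    = (1 - m) * r^2 / M * ((nn - 1) / m * (m * ((m - 1) * (M / V^2) * V1^2 + (M / V) * V2) + (nn - 1) * (m * (M / V) * V1) / r)
       + 2 * \<beta> / (1 - m) * V + \<beta> * (r * V1))"
    using assms(2-6) unfolding assms(1) by (simp add: field_simps power2_eq_square)
  then show ?thesis using ode by simp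
qed

lemma p_pos_global:
  fixes p p' :: "real \<Rightarrow> real"
  assumes der: "\<And>s. (p has_real_derivative p' s) (at s)"
    and lim: "(p \<longlongrightarrow> 2) at_bot"
    and zero: "\<And>s. p s = 0 \<Longrightarrow> p' s > 0"
  shows "p s > 0"
proof (rule ccontr)
  assume "\<not> p s > 0"
  then have s1: "p s \<le> 0" by simp
  have cont: "continuous_on UNIV p" using der by (meson DERIV_isCont continuous_at_imp_continuous_on)
  have "eventually (\<lambda>t. p t > 1) at_bot" using order_tendstoD(1)[OF lim, of 1] by simp
  then obtain T0 where T0: "\<And>t. t \<le> T0 \<Longrightarrow> p t > 1" by (auto simp: eventually_at_bot_linorder)
  define T where "T = min T0 (s - 1)"
  have T: "T < s" "p T > 1" using T0 by (auto simp: T_def)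
  define S where "S = {T..s} \<inter> {t. p t \<le> 0}"
  have "s \<in> S" using s1 T by (auto simp: S_def)
  then have Sne: "S \<noteq> {}" by blast
  have Sbd: "bdd_below S" by (auto simp: S_def)
  have Scl: "closed S" unfolding S_def
    by (intro closed_Int closed_atLeastAtMost closed_Collect_le cont continuous_on_const)
  define t0 where "t0 = Inf S"
  have t0S: "t0 \<in> S" unfolding t0_def by (rule closed_contains_Inf[OF Sne Sbd Scl])
  have t0min: "\<And>t. t \<in> S \<Longrightarrow> t0 \<le> t" unfolding t0_def using Sbd by (simp add: cInf_lower)
  have pt0: "p t0 \<le> 0" "T \<le> t0" "t0 \<le> s" using t0S by (auto simp: S_def)
  have Tt0: "T < t0" using pt0 T by (cases "T = t0") auto
  have pt0z: "p t0 = 0"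
  proof (rule ccontr)
    assume "p t0 \<noteq> 0"
    then have neg: "p t0 < 0" using pt0 by simp
    obtain x where x: "T \<le> x" "x \<le> t0" "p x = p t0 / 2"
      using IVT2'[of p t0 "p t0 / 2" T] neg T Tt0 continuous_on_subset[OF cont]
      by fastforce
    have "x \<in> S" using x neg pt0 by (auto simp: S_def)
    then have "t0 \<le> x" by (rule t0min)
    then have "x = t0" using x by simp
    then show False using x neg by simp
  qed
  obtain d where d: "d > 0" "\<And>h. h > 0 \<Longrightarrow> h < d \<Longrightarrow> p (t0 - h) < p t0"
    using DERIV_pos_inc_left[OF der zero[OF pt0z]] by blast
  define h where "h = min (d / 2) (t0 - T)"
  have h: "h > 0" "h < d" "h \<le> t0 - T" using d Tt0 by (auto simp: h_def)
  have "p (t0 - h) < 0" using d(2)[OF h(1,2)] pt0z by simp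
  then have "t0 - h \<in> S" using h pt0 by (auto simp: S_def)
  then have "t0 \<le> t0 - h" by (rule t0min)
  then show False using h by simp
qed


lemma alg4:
  fixes W s L m \<beta> K k N Q P :: real
  assumes "m = 1 - k" "k \<noteq> 0" "Q \<noteq> 0" "\<beta> \<noteq> 0" "N \<noteq> 0" "s \<noteq> 0"
  shows "W - 2 * N * Q / ((1 - m) * \<beta>) * s + N * P / ((1 - m) * \<beta>) * L - K
      - N * P^2 / (2 * Q * (1 - m) * \<beta>) * ((1 + L) / s)
      + (1 - m) * (2 * (1 - 2 * m) * N * Q / (1 - m)^2 + N * P^2 / (1 - m)^2 + P / (1 - m) * K * \<beta>)
         / (2 * Q * \<beta> * s)
    = W - (2 * N * Q / ((1 - m) * \<beta>)) * s + (N * P / ((1 - m) * \<beta>)) * L - K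
      - ((N * P / ((1 - m) * \<beta>))^2 / (2 * N * Q / ((1 - m) * \<beta>))) * (1 + L) / s
      + ((N / ((1 - m) * \<beta>)) * ((2 * N * Q / ((1 - m) * \<beta>)) * (N * P / ((1 - m) * \<beta>)) * P
           + (1 - 2 * m) * (2 * N * Q / ((1 - m) * \<beta>))^2) / (2 * N * Q / ((1 - m) * \<beta>))^2
         + ((N * P / ((1 - m) * \<beta>)) / (2 * N * Q / ((1 - m) * \<beta>))) * K) / s"
  using assms(2-6) unfolding assms(1) by (simp add: field_simps power2_eq_square)

lemma asy_from_radial:
  fixes v dv ddv :: "real \<Rightarrow> real" and nn m \<beta> lam :: real
  assumes n3: "nn \<ge> 3" and m0: "0 < m" and Qp: "nn - 2 - nn * m > 0" and b0: "\<beta> > 0" and lam: "lam > 0"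
    and vpos: "\<And>r. r > 0 \<Longrightarrow> v r > 0"
    and d1: "\<And>r. r > 0 \<Longrightarrow> (v has_real_derivative dv r) (at r)"
    and d2: "\<And>r. r > 0 \<Longrightarrow> (dv has_real_derivative ddv r) (at r)"
    and ode: "\<And>r. r > 0 \<Longrightarrow> (nn - 1) / m * (m * ((m - 1) * v r powr (m - 2) * (dv r)^2 + v r powr (m - 1) * ddv r)
        + (nn - 1) * (m * v r powr (m - 1) * dv r) / r) + 2 * \<beta> / (1 - m) * v r + \<beta> * (r * dv r) = 0"
    and l0: "(v \<longlongrightarrow> lam) (at_right 0)" and l1: "((\<lambda>r. r * dv r) \<longlongrightarrow> 0) (at_right 0)"
  shows "\<exists>K. (h1_fun nn m \<beta> v \<longlongrightarrow> K) at_top \<and>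
    ((\<lambda>s. s * (h2_fun nn m \<beta> v K s + (1 - m) * a1_fun nn m \<beta> K / (2 * (nn - 2 - nn * m) * \<beta> * s)))
      \<longlongrightarrow> 0) at_top"
proof -
  have m1: "m < 1"
  proof -
    have "nn * m < nn - 2" using Qp by simp
    moreover have "nn > 0" using n3 by simp
    ultimately have "nn * m < nn * 1" by linarith
    then show ?thesis using \<open>nn > 0\<close> by simp
  qed
  define w where "w = w_fun m v"
  define p where "p s = 2 + (1 - m) * (exp s * dv (exp s) / v (exp s))" for s
  define p' where "p' s = (1 - m) * (((exp s * dv (exp s) + exp s * (exp s * ddv (exp s))) * v (exp s)
      - exp s * dv (exp s) * (exp s * dv (exp s))) / (v (exp s))^2)" for s
  have ve: "v (exp s) > 0" for s using vpos by simp
  have wpos: "w s > 0" for s using ve[of s] by (simp add: w_def w_fun_def)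
  have dve: "((\<lambda>s. v (exp s)) has_real_derivative dv (exp s) * exp s) (at s)" for s
    by (rule DERIV_chain2[OF d1 DERIV_exp]) simp
  have dv1e: "((\<lambda>s. dv (exp s)) has_real_derivative ddv (exp s) * exp s) (at s)" for s
    by (rule DERIV_chain2[OF d2 DERIV_exp]) simp
  have wder: "(w has_real_derivative w s * p s) (at s)" for s
  proof -
    have pw: "DERIV (\<lambda>s. v (exp s) powr (1 - m)) s :> (1 - m) * v (exp s) powr ((1 - m) - of_nat 1) * (dv (exp s) * exp s)"
      by (rule DERIV_fun_powr[OF dve ve])
    have e2: "DERIV (\<lambda>s. (exp s)^2) s :> 2 * exp s * exp s"
      by (auto intro!: derivative_eq_intros simp: power2_eq_square)
    have X: "(w has_real_derivative (2 * exp s * exp s) * v (exp s) powr (1 - m)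
        + (1 - m) * v (exp s) powr ((1 - m) - of_nat 1) * (dv (exp s) * exp s) * (exp s)^2) (at s)"
      unfolding w_def w_fun_def[abs_def] by (rule DERIV_mult[OF e2 pw])
    have hp: "v (exp s) powr ((1 - m) - of_nat 1) = v (exp s) powr (1 - m) / v (exp s)"
      unfolding of_nat_1 powr_diff using ve[of s] by simp
    have eqD: "(2 * exp s * exp s) * v (exp s) powr (1 - m)
        + (1 - m) * v (exp s) powr ((1 - m) - of_nat 1) * (dv (exp s) * exp s) * (exp s)^2 = w s * p s"
      unfolding hp using ve[of s] by (simp add: w_def w_fun_def p_def field_simps power2_eq_square)
    show ?thesis using X unfolding eqD .
  qed
  have pder: "(p has_real_derivative p' s) (at s)" for s
  proof -
    have "((\<lambda>s. exp s * dv (exp s) / v (exp s)) has_real_derivative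
        ((exp s * dv (exp s) + (ddv (exp s) * exp s) * exp s) * v (exp s) - exp s * dv (exp s) * (dv (exp s) * exp s))
          / (v (exp s) * v (exp s))) (at s)"
      using DERIV_divide[OF DERIV_mult[OF DERIV_exp dv1e] dve] ve[of s] by (simp add: algebra_simps)
    then have "(p has_real_derivative 0 + (1 - m) * (((exp s * dv (exp s) + (ddv (exp s) * exp s) * exp s) * v (exp s)
        - exp s * dv (exp s) * (dv (exp s) * exp s)) / (v (exp s) * v (exp s)))) (at s)"
      unfolding p_def[abs_def] by (intro DERIV_add DERIV_const DERIV_cmult)
    then show ?thesis by (simp add: p'_def power2_eq_square algebra_simps)
  qed
  have odes: "(nn - 1) * (p' s + m * (p s - 2)^2 / (1 - m) + (nn - 2) * (p s - 2)) + \<beta> * w s * p s = 0" for s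
  proof -
    define r where "r = exp s"
    have r0: "r > 0" by (simp add: r_def)
    define V where "V = v r"
    have V0: "V > 0" using vpos r0 by (simp add: V_def)
    define M where "M = V powr m"
    have M0: "M > 0" using V0 by (simp add: M_def)
    have h1: "V powr (m - 2) = M / V^2" using V0 by (simp add: M_def powr_diff)
    have h2: "V powr (m - 1) = M / V" using V0 by (simp add: M_def powr_diff)
    have h3: "V powr (1 - m) = V / M" using V0 by (simp add: M_def powr_diff)
    have o: "(nn - 1) / m * (m * ((m - 1) * (M / V^2) * (dv r)^2 + (M / V) * ddv r) + (nn - 1) * (m * (M / V) * dv r) / r)
       + 2 * \<beta> / (1 - m) * V + \<beta> * (r * dv r) = 0"
      using ode[OF r0] unfolding V_def[symmetric] h1 h2 .
    have "(nn - 1) * ((1 - m) * (((r * dv r + r * (r * ddv r)) * V - r * dv r * (r * dv r)) / V^2)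
      + m * ((2 + (1 - m) * (r * dv r / V)) - 2)^2 / (1 - m) + (nn - 2) * ((2 + (1 - m) * (r * dv r / V)) - 2))
      + \<beta> * (r^2 * (V / M)) * (2 + (1 - m) * (r * dv r / V)) = 0"
      by (rule alg3[OF _ _ _ _ _ _ o, where k="1 - m"]) (use m0 m1 r0 V0 M0 in auto)
    then show ?thesis
      by (simp add: p_def p'_def w_def w_fun_def r_def[symmetric] V_def[symmetric] h3)
  qed
  have plim: "(p \<longlongrightarrow> 2) at_bot"
  proof -
    have ex: "filterlim (exp :: real \<Rightarrow> real) (at_right 0) at_bot"
      unfolding filterlim_at by (auto intro!: exp_at_bot always_eventually)
    have a: "((\<lambda>s. exp s * dv (exp s)) \<longlongrightarrow> 0) at_bot"
      using filterlim_compose[OF l1 ex] by simp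
    have b: "((\<lambda>s. v (exp s)) \<longlongrightarrow> lam) at_bot"
      using filterlim_compose[OF l0 ex] by simp
    have "(p \<longlongrightarrow> 2 + (1 - m) * (0 / lam)) at_bot"
      unfolding p_def[abs_def] by (intro tendsto_intros a b) (use lam in auto)
    then show ?thesis by simp
  qed
  have pzero: "p' s > 0" if "p s = 0" for s
  proof -
    have "(nn - 1) * (p' s + m * (p s - 2)^2 / (1 - m) + (nn - 2) * (p s - 2)) = 0"
      using odes[of s] that by simp
    then have "p' s + m * (p s - 2)^2 / (1 - m) + (nn - 2) * (p s - 2) = 0" using n3 by simp
    then have "p' s + m * 4 / (1 - m) - 2 * (nn - 2) = 0" using that by simp
    then have "p' s * (1 - m) = 2 * (nn - 2) * (1 - m) - 4 * m"
      using m1 by (simp add: field_simps)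
    also have "\<dots> = 2 * (nn - 2 - nn * m)" by (simp add: algebra_simps)
    finally have "p' s * (1 - m) > 0" using Qp by simp
    then show ?thesis using m1 by (simp add: zero_less_mult_iff)
  qed
  have ppos: "p s > 0" for s by (rule p_pos_global[OF pder plim pzero])
  interpret asy nn m \<beta> w p p'
    by unfold_locales (rule n3 m0 Qp b0 wpos ppos wder pder odes)+
  obtain K where K1: "((\<lambda>s. w s - A * s + B * ln s) \<longlongrightarrow> K) at_top"
    and K2: "((\<lambda>s. s * (w s - A * s + B * ln s - K - (B^2 / A) * (1 + ln s) / s
         + (C2 / A^2 + (B / A) * K) / s)) \<longlongrightarrow> 0) at_top"
    using asy_result by blast
  have e1: "h1_fun nn m \<beta> v = (\<lambda>s. w s - A * s + B * ln s)"
    by (rule ext) (simp add: h1_fun_def h_fun_def w_def A_def B_def N_def Q_def P_def)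
  have e2: "s * (h2_fun nn m \<beta> v K s + (1 - m) * a1_fun nn m \<beta> K / (2 * (nn - 2 - nn * m) * \<beta> * s))
     = s * (w s - A * s + B * ln s - K - (B^2 / A) * (1 + ln s) / s + (C2 / A^2 + (B / A) * K) / s)" for s
  proof (cases "s = 0")
    case False
    have "h2_fun nn m \<beta> v K s + (1 - m) * a1_fun nn m \<beta> K / (2 * (nn - 2 - nn * m) * \<beta> * s)
      = w s - A * s + B * ln s - K - (B^2 / A) * (1 + ln s) / s + (C2 / A^2 + (B / A) * K) / s"
      unfolding h2_fun_def h1_fun_def h_fun_def a1_fun_def C2_def A_def B_def N_def Q_def P_def w_def[symmetric]
      by (rule alg4[where k="1 - m"]) (use False Qp b0 n3 in auto)
    then show ?thesis by simp
  qed simp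
  have e3: "(\<lambda>s. s * (h2_fun nn m \<beta> v K s + (1 - m) * a1_fun nn m \<beta> K / (2 * (nn - 2 - nn * m) * \<beta> * s)))
     = (\<lambda>s. s * (w s - A * s + B * ln s - K - (B^2 / A) * (1 + ln s) / s + (C2 / A^2 + (B / A) * K) / s))"
    by (rule ext) (rule e2)
  show ?thesis
    by (rule exI[of _ K]) (use K1 K2 in \<open>unfold e1 e3, blast\<close>)
qed


lemma norm_axis_scale: "norm (t *\<^sub>R axis k (1::real)) = \<bar>t\<bar>"
  by simp

lemma norm_axis2:
  fixes k i :: "'n::finite"
  assumes "i \<noteq> k"
  shows "norm (r *\<^sub>R axis k (1::real) + t *\<^sub>R axis i 1) = sqrt (r^2 + t^2)"
proof -
  have "(r *\<^sub>R axis k (1::real) + t *\<^sub>R axis i 1) \<bullet> (r *\<^sub>R axis k (1::real) + t *\<^sub>R axis i 1) = r^2 + t^2"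
    using assms by (simp add: inner_add_left inner_add_right inner_axis_axis power2_eq_square)
  then show ?thesis by (simp add: norm_eq_sqrt_inner)
qed

lemma partial_at:
  fixes F :: "real^'n::finite \<Rightarrow> real"
  assumes "open S" "0 \<in> S" "\<And>\<tau>. \<tau> \<in> S \<Longrightarrow> F (y + \<tau> *\<^sub>R axis i 1) = f \<tau>"
    and "(f has_real_derivative D) (at 0)"
  shows "partial i F y = D"
proof -
  have "((\<lambda>\<tau>. F (y + \<tau> *\<^sub>R axis i 1)) has_real_derivative D) (at 0)"
    by (rule has_field_derivative_transform_within_open[OF assms(4,1,2)]) (use assms(3) in auto)
  then show ?thesis unfolding partial_def by (rule DERIV_imp_deriv)
qed

lemma shift_deriv:
  assumes "(f has_real_derivative D) (at t)"
  shows "((\<lambda>\<tau>. f (t + \<tau>)) has_real_derivative D) (at 0)"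
  using DERIV_shift[of f D 0 t] assms by (simp add: add.commute)

lemma radial_facts:
  fixes v :: "real \<Rightarrow> real" and m \<beta> :: real
  assumes sol: "classical_sol m \<beta> (\<lambda>x::real^'n::finite. v (norm x))"
  shows "\<And>r. r \<ge> 0 \<Longrightarrow> v r > 0"
    and "\<And>r. r > 0 \<Longrightarrow> (v has_real_derivative deriv v r) (at r)"
    and "\<And>r. r > 0 \<Longrightarrow> (deriv v has_real_derivative deriv (deriv v) r) (at r)"
    and "(v \<longlongrightarrow> v 0) (at_right 0)"
    and "((\<lambda>r. r * deriv v r) \<longlongrightarrow> 0) (at_right 0)"
proof -
  define V where "V = (\<lambda>x::real^'n. v (norm x))"
  obtain k :: 'n where True by blast
  define e where "e = axis k (1::real)"
  have Vpos: "\<And>x. V x > 0" and C2: "C2_fun V"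
    using sol by (auto simp: classical_sol_def V_def)
  have Vd: "\<And>x. V differentiable (at x)" and Pd: "\<And>i x. partial i V differentiable (at x)"
    using C2 by (auto simp: C2_fun_def)
  have ve: "v t = V (t *\<^sub>R e)" if "t \<ge> 0" for t using that by (simp add: V_def e_def)
  show vpos: "\<And>r. r \<ge> 0 \<Longrightarrow> v r > 0" using ve Vpos by simp
  have lin: "(\<lambda>t::real. t *\<^sub>R e) differentiable (at x)" for x
    by (rule bounded_linear_imp_differentiable) (rule bounded_linear_scaleR_left)
  have comp: "(\<lambda>t. G (t *\<^sub>R e)) differentiable (at r)" if "\<And>x. G differentiable (at x)" for G :: "real^'n \<Rightarrow> real" and r
    using differentiable_chain_at[OF lin that] by (simp add: o_def)
  show vd: "\<And>r. r > 0 \<Longrightarrow> (v has_real_derivative deriv v r) (at r)"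
  proof -
    fix r :: real assume r: "r > 0"
    have "((\<lambda>t. V (t *\<^sub>R e)) has_real_derivative deriv (\<lambda>t. V (t *\<^sub>R e)) r) (at r)"
      using comp[OF Vd] DERIV_deriv_iff_real_differentiable by blast
    then have "(v has_real_derivative deriv (\<lambda>t. V (t *\<^sub>R e)) r) (at r)"
      by (rule has_field_derivative_transform_within_open[where S="{0<..}"]) (use r ve in auto)
    then show "(v has_real_derivative deriv v r) (at r)"
      using DERIV_imp_deriv by metis
  qed
  have pk: "partial k V (t *\<^sub>R e) = deriv v t" if t: "t > 0" for t
  proof (rule partial_at[where S="{-t<..}" and f="\<lambda>\<tau>. v (t + \<tau>)"])
    show "open {- t<..}" by simp
    show "0 \<in> {- t<..}" using t by simp
    show "V (t *\<^sub>R e + \<tau> *\<^sub>R axis k 1) = v (t + \<tau>)" if "\<tau> \<in> {- t<..}" for \<tau>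
      using that by (simp add: V_def e_def scaleR_add_left[symmetric])
    show "((\<lambda>\<tau>. v (t + \<tau>)) has_real_derivative deriv v t) (at 0)"
      by (rule shift_deriv[OF vd[OF t]])
  qed
  show "\<And>r. r > 0 \<Longrightarrow> (deriv v has_real_derivative deriv (deriv v) r) (at r)"
  proof -
    fix r :: real assume r: "r > 0"
    have "((\<lambda>t. partial k V (t *\<^sub>R e)) has_real_derivative deriv (\<lambda>t. partial k V (t *\<^sub>R e)) r) (at r)"
      using comp[OF Pd] DERIV_deriv_iff_real_differentiable by blast
    then have "(deriv v has_real_derivative deriv (\<lambda>t. partial k V (t *\<^sub>R e)) r) (at r)"
      by (rule has_field_derivative_transform_within_open[where S="{0<..}"]) (use r pk in auto)
    then show "(deriv v has_real_derivative deriv (deriv v) r) (at r)"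
      using DERIV_imp_deriv by metis
  qed
  have ctr: "((\<lambda>t. G (t *\<^sub>R e)) \<longlongrightarrow> G 0) (at_right 0)" if "\<And>x. G differentiable (at x)" for G :: "real^'n \<Rightarrow> real"
  proof -
    have "isCont (\<lambda>t. G (t *\<^sub>R e)) 0"
      using comp[OF that] differentiable_imp_continuous_within by blast
    then have "((\<lambda>t. G (t *\<^sub>R e)) \<longlongrightarrow> G 0) (at 0)" by (simp add: isCont_def)
    then show ?thesis by (rule filterlim_mono) (auto simp: at_le)
  qed
  show "(v \<longlongrightarrow> v 0) (at_right 0)"
  proof -
    have "((\<lambda>t. V (t *\<^sub>R e)) \<longlongrightarrow> V 0) (at_right 0)" by (rule ctr[OF Vd])
    moreover have "eventually (\<lambda>t. V (t *\<^sub>R e) = v t) (at_right 0)"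
      by (auto simp: eventually_at_right_less ve[symmetric] eventually_at_filter intro: eventually_mono)
    ultimately show ?thesis by (simp add: V_def Lim_transform_eventually)
  qed
  show "((\<lambda>r. r * deriv v r) \<longlongrightarrow> 0) (at_right 0)"
  proof -
    have "((\<lambda>t. partial k V (t *\<^sub>R e)) \<longlongrightarrow> partial k V 0) (at_right 0)" by (rule ctr[OF Pd])
    moreover have "eventually (\<lambda>t. partial k V (t *\<^sub>R e) = deriv v t) (at_right 0)"
      using pk by (auto simp: eventually_at_filter)
    ultimately have "(deriv v \<longlongrightarrow> partial k V 0) (at_right 0)"
      by (rule Lim_transform_eventually)
    then have "((\<lambda>r. r * deriv v r) \<longlongrightarrow> 0 * partial k V 0) (at_right 0)"
      by (rule tendsto_mult[OF tendsto_ident_at])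
    then show ?thesis by simp
  qed
qed


lemma radial_ode:
  fixes v :: "real \<Rightarrow> real" and m \<beta> r :: real
  assumes sol: "classical_sol m \<beta> (\<lambda>x::real^'n::finite. v (norm x))" and r: "r > 0"
  shows "(real CARD('n) - 1) / m * (m * ((m - 1) * v r powr (m - 2) * (deriv v r)^2 + v r powr (m - 1) * deriv (deriv v) r)
        + (real CARD('n) - 1) * (m * v r powr (m - 1) * deriv v r) / r) + 2 * \<beta> / (1 - m) * v r + \<beta> * (r * deriv v r) = 0"
proof -
  define V where "V = (\<lambda>x::real^'n. v (norm x))"
  define U where "U = (\<lambda>y::real^'n. v (norm y) powr m)"
  obtain k :: 'n where True by blast
  define e where "e = axis k (1::real)"
  define v1 where "v1 = deriv v"
  define v2 where "v2 = deriv v1"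
  have vpos: "\<And>t. t \<ge> 0 \<Longrightarrow> v t > 0" and vd: "\<And>t. t > 0 \<Longrightarrow> (v has_real_derivative v1 t) (at t)"
    and v1d: "\<And>t. t > 0 \<Longrightarrow> (v1 has_real_derivative v2 t) (at t)"
    using radial_facts[OF sol] by (auto simp: v1_def v2_def)
  define \<phi> where "\<phi> t = v t powr m" for t
  define \<phi>1 where "\<phi>1 t = m * v t powr (m - 1) * v1 t" for t
  define \<phi>2 where "\<phi>2 t = m * ((m - 1) * v t powr (m - 2) * v1 t * v1 t + v t powr (m - 1) * v2 t)" for t
  have d\<phi>: "(\<phi> has_real_derivative \<phi>1 t) (at t)" if t: "t > 0" for t
    using DERIV_fun_powr[OF vd[OF t] vpos[of t], of m] t unfolding of_nat_1
    by (simp add: \<phi>_def[abs_def] \<phi>1_def)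
  have d\<phi>1: "(\<phi>1 has_real_derivative \<phi>2 t) (at t)" if t: "t > 0" for t
  proof -
    have a: "(m - 1) - of_nat 1 = m - 2" by simp
    have "(\<phi>1 has_real_derivative (m * ((m - 1) * v t powr ((m - 1) - of_nat 1) * v1 t)) * v1 t
        + v2 t * (m * v t powr (m - 1))) (at t)"
      unfolding \<phi>1_def[abs_def]
      by (rule DERIV_mult[OF DERIV_cmult[OF DERIV_fun_powr[OF vd[OF t] vpos]] v1d[OF t]]) (use t in simp)
    then show ?thesis unfolding a \<phi>2_def by (simp add: algebra_simps)
  qed
  have Ud: "U (t *\<^sub>R e) = \<phi> t" if "t \<ge> 0" for t using that by (simp add: U_def e_def \<phi>_def)
  have Pk: "partial k U (t *\<^sub>R e) = \<phi>1 t" if t: "t > 0" for t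
  proof (rule partial_at[where S="{-t<..}" and f="\<lambda>\<tau>. \<phi> (t + \<tau>)"])
    show "open {- t<..}" by simp
    show "0 \<in> {- t<..}" using t by simp
    show "U (t *\<^sub>R e + \<tau> *\<^sub>R axis k 1) = \<phi> (t + \<tau>)" if "\<tau> \<in> {- t<..}" for \<tau>
      using that Ud[of "t + \<tau>"] by (simp add: e_def scaleR_add_left[symmetric])
    show "((\<lambda>\<tau>. \<phi> (t + \<tau>)) has_real_derivative \<phi>1 t) (at 0)"
      by (rule shift_deriv[OF d\<phi>[OF t]])
  qed
  have Lk: "partial k (partial k U) (r *\<^sub>R e) = \<phi>2 r"
  proof (rule partial_at[where S="{-r<..}" and f="\<lambda>\<tau>. \<phi>1 (r + \<tau>)"])
    show "open {- r<..}" by simp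
    show "0 \<in> {- r<..}" using r by simp
    show "partial k U (r *\<^sub>R e + \<tau> *\<^sub>R axis k 1) = \<phi>1 (r + \<tau>)" if "\<tau> \<in> {- r<..}" for \<tau>
      using that Pk[of "r + \<tau>"] by (simp add: e_def scaleR_add_left[symmetric])
    show "((\<lambda>\<tau>. \<phi>1 (r + \<tau>)) has_real_derivative \<phi>2 r) (at 0)"
      by (rule shift_deriv[OF d\<phi>1[OF r]])
  qed
  have rho_pos: "sqrt (r^2 + t^2) > 0" for t using r by (simp add: add_pos_nonneg)
  have Pi: "partial i U (r *\<^sub>R e + t *\<^sub>R axis i 1) = \<phi>1 (sqrt (r^2 + t^2)) * (t / sqrt (r^2 + t^2))"
    if ik: "i \<noteq> k" for i t
  proof (rule partial_at[where S=UNIV and f="\<lambda>\<tau>. \<phi> (sqrt (r^2 + (t + \<tau>)^2))"])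
    show "open (UNIV :: real set)" by simp
    show "0 \<in> (UNIV :: real set)" by simp
    show "U (r *\<^sub>R e + t *\<^sub>R axis i 1 + \<tau> *\<^sub>R axis i 1) = \<phi> (sqrt (r^2 + (t + \<tau>)^2))" for \<tau>
    proof -
      have "r *\<^sub>R e + t *\<^sub>R axis i 1 + \<tau> *\<^sub>R axis i 1 = r *\<^sub>R axis k 1 + (t + \<tau>) *\<^sub>R axis i (1::real)"
        by (simp add: e_def scaleR_add_left)
      then show ?thesis using norm_axis2[OF ik, of r "t + \<tau>"] by (simp add: U_def \<phi>_def)
    qed
    have g: "((\<lambda>\<tau>. sqrt (r^2 + (t + \<tau>)^2)) has_real_derivative t / sqrt (r^2 + (t + 0)^2)) (at 0)"
      using rho_pos[of t] by (auto intro!: derivative_eq_intros simp: field_simps)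
    have f: "(\<phi> has_real_derivative \<phi>1 (sqrt (r^2 + (t + 0)^2))) (at (sqrt (r^2 + (t + 0)^2)))"
      by (rule d\<phi>) (use rho_pos[of t] in simp)
    show "((\<lambda>\<tau>. \<phi> (sqrt (r^2 + (t + \<tau>)^2))) has_real_derivative \<phi>1 (sqrt (r^2 + t^2)) * (t / sqrt (r^2 + t^2))) (at 0)"
      using DERIV_chain2[OF f g] by simp
  qed
  have Li: "partial i (partial i U) (r *\<^sub>R e) = \<phi>1 r / r" if ik: "i \<noteq> k" for i
  proof (rule partial_at[where S=UNIV and f="\<lambda>t. \<phi>1 (sqrt (r^2 + t^2)) * (t / sqrt (r^2 + t^2))"])
    show "open (UNIV :: real set)" by simp
    show "0 \<in> (UNIV :: real set)" by simp
    show "partial i U (r *\<^sub>R e + t *\<^sub>R axis i 1) = \<phi>1 (sqrt (r^2 + t^2)) * (t / sqrt (r^2 + t^2))" for t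
      by (rule Pi[OF ik])
    have sr: "sqrt (r^2 + 0^2) = r" using r by simp
    have g: "((\<lambda>t. sqrt (r^2 + t^2)) has_real_derivative 0) (at 0)"
      using r by (auto intro!: derivative_eq_intros)
    have f: "(\<phi>1 has_real_derivative \<phi>2 (sqrt (r^2 + 0^2))) (at (sqrt (r^2 + 0^2)))"
      unfolding sr by (rule d\<phi>1[OF r])
    have h1: "((\<lambda>t. \<phi>1 (sqrt (r^2 + t^2))) has_real_derivative \<phi>2 (sqrt (r^2 + 0^2)) * 0) (at 0)"
      by (rule DERIV_chain2[OF f g])
    have h2: "((\<lambda>t. t / sqrt (r^2 + t^2)) has_real_derivative 1 / r) (at 0)"
      using r by (auto intro!: derivative_eq_intros simp: field_simps)
    show "((\<lambda>t. \<phi>1 (sqrt (r^2 + t^2)) * (t / sqrt (r^2 + t^2))) has_real_derivative \<phi>1 r / r) (at 0)"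
      using DERIV_mult[OF h1 h2] sr by simp
  qed
  have lap: "laplacian U (r *\<^sub>R e) = \<phi>2 r + (real CARD('n) - 1) * (\<phi>1 r / r)"
  proof -
    have "laplacian U (r *\<^sub>R e) = partial k (partial k U) (r *\<^sub>R e) + (\<Sum>i\<in>UNIV - {k}. partial i (partial i U) (r *\<^sub>R e))"
      unfolding laplacian_def by (rule sum.remove) auto
    also have "(\<Sum>i\<in>UNIV - {k}. partial i (partial i U) (r *\<^sub>R e)) = (\<Sum>i\<in>UNIV - {k}. \<phi>1 r / r)"
      by (rule sum.cong) (auto simp: Li)
    also have "\<dots> = real (CARD('n) - 1) * (\<phi>1 r / r)" by (simp add: card_Diff_singleton)
    also have "real (CARD('n) - 1) = real CARD('n) - 1"
      using of_nat_diff[of 1 "CARD('n)"] by (simp add: Suc_leI)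
    finally show ?thesis using Lk by simp
  qed
  have drift: "(\<Sum>i\<in>UNIV. (r *\<^sub>R e) $ i * partial i V (r *\<^sub>R e)) = r * v1 r"
  proof -
    have "(\<Sum>i\<in>UNIV. (r *\<^sub>R e) $ i * partial i V (r *\<^sub>R e))
        = (r *\<^sub>R e) $ k * partial k V (r *\<^sub>R e) + (\<Sum>i\<in>UNIV - {k}. (r *\<^sub>R e) $ i * partial i V (r *\<^sub>R e))"
      by (rule sum.remove) auto
    also have "(\<Sum>i\<in>UNIV - {k}. (r *\<^sub>R e) $ i * partial i V (r *\<^sub>R e)) = 0"
      by (rule sum.neutral) (auto simp: e_def axis_def)
    also have "partial k V (r *\<^sub>R e) = v1 r"
    proof (rule partial_at[where S="{-r<..}" and f="\<lambda>\<tau>. v (r + \<tau>)"])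
      show "open {- r<..}" by simp
      show "0 \<in> {- r<..}" using r by simp
      show "V (r *\<^sub>R e + \<tau> *\<^sub>R axis k 1) = v (r + \<tau>)" if "\<tau> \<in> {- r<..}" for \<tau>
        using that by (simp add: V_def e_def scaleR_add_left[symmetric])
      show "((\<lambda>\<tau>. v (r + \<tau>)) has_real_derivative v1 r) (at 0)"
        by (rule shift_deriv[OF vd[OF r]])
    qed
    finally show ?thesis by (simp add: e_def)
  qed
  have pde: "(real CARD('n) - 1) / m * laplacian U (r *\<^sub>R e) + 2 * \<beta> / (1 - m) * V (r *\<^sub>R e)
      + \<beta> * (\<Sum>i\<in>UNIV. (r *\<^sub>R e) $ i * partial i V (r *\<^sub>R e)) = 0"
    using sol unfolding classical_sol_def V_def U_def by blast
  have Ve: "V (r *\<^sub>R e) = v r" using r by (simp add: V_def e_def)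
  have "(real CARD('n) - 1) / m * (\<phi>2 r + (real CARD('n) - 1) * (\<phi>1 r / r)) + 2 * \<beta> / (1 - m) * v r + \<beta> * (r * v1 r) = 0"
    using pde unfolding lap drift Ve .
  then show ?thesis by (simp add: \<phi>1_def \<phi>2_def v1_def v2_def power2_eq_square mult.assoc)
qed



theorem lemma2p8:
  fixes v :: "real \<Rightarrow> real" and n :: nat and m \<beta> lam :: real
  assumes "CARD('n::finite) = n" and "n \<ge> 3"
    and "0 < m" and "m < (real n - 2) / real n" and "m \<noteq> (real n - 2) / (real n + 2)"
    and "lam > 0" and "\<beta> > 0"
    and "classical_sol m \<beta> (\<lambda>x::real^'n. v (norm x))"
    and "v 0 = lam"
  shows "\<exists>K. ((h1_fun (real n) m \<beta> v) \<longlongrightarrow> K) at_top \<and>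
           ((\<lambda>s. s * (h2_fun (real n) m \<beta> v K s
                 + (1 - m) * a1_fun (real n) m \<beta> K / (2 * (real n - 2 - real n * m) * \<beta> * s)))
             \<longlongrightarrow> 0) at_top"
proof (rule asy_from_radial[where dv="deriv v" and ddv="deriv (deriv v)" and lam=lam])
  note sol = assms(8)
  show "3 \<le> real n" using assms(2) by simp
  show "0 < m" by fact
  show "0 < \<beta>" by fact
  show "0 < lam" by fact
  have n0: "real n > 0" using assms(2) by simp
  have "m * real n < real n - 2" using assms(4) n0 by (simp add: pos_less_divide_eq)
  then show "0 < real n - 2 - real n * m" by (simp add: algebra_simps)
  show "\<And>r. 0 < r \<Longrightarrow> 0 < v r" using radial_facts(1)[OF sol] by simp
  show "\<And>r. 0 < r \<Longrightarrow> (v has_real_derivative deriv v r) (at r)" using radial_facts(2)[OF sol] by simp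
  show "\<And>r. 0 < r \<Longrightarrow> (deriv v has_real_derivative deriv (deriv v) r) (at r)" using radial_facts(3)[OF sol] by simp
  show "\<And>r. 0 < r \<Longrightarrow> (real n - 1) / m * (m * ((m - 1) * v r powr (m - 2) * (deriv v r)^2 + v r powr (m - 1) * deriv (deriv v) r)
        + (real n - 1) * (m * v r powr (m - 1) * deriv v r) / r) + 2 * \<beta> / (1 - m) * v r + \<beta> * (r * deriv v r) = 0"
    using radial_ode[OF sol] assms(1) by simp
  show "(v \<longlongrightarrow> lam) (at_right 0)" using radial_facts(4)[OF sol] assms(9) by simp
  show "((\<lambda>r. r * deriv v r) \<longlongrightarrow> 0) (at_right 0)" using radial_facts(5)[OF sol] by simp
qed


end
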